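(* Let $T$ be an iso-unique zero forcing tree, let $\mathcal{P}$ be a minimum path cover of $T$, and let $P: x_1,\ldots,x_\ell$ be a path in $\mathcal{P}$. Let $p=\frac{\ell+1}{2}$ if $\ell$ is odd and $p=\frac{\ell}{2}$ if $\ell$ is even. (a) If $\ell$ is odd, then the connected components of $T-x_p$ that contain $x_{p-1}$ and $x_{p+1}$, respectively, are isomorphic. (b) If $\ell$ is even, then the connected components of $T-x_px_{p+1}$ that contain $x_p$ and $x_{p+1}$, respectively, are isomorphic. Moreover, there is an automorphism of $T$ that maps $x_1$ to $x_\ell$ and $x_\ell$ to $x_1$.
   Context: Zero forcing: in a graph $G$, starting with an initial set $S\subseteq V(G)$ of active vertices, repeatedly apply the rule: if an active vertex $u$ has exactly one non-active neighbor $v$, then $v$ becomes active. $S$ is a zero forcing set if eventually all vertices become active; a minimum zero forcing set is one of minimum size. A graph is an iso-unique zero forcing graph if for every two minimum zero forcing sets $A,B$ there is an automorphism $\phi$ with $\phi(A)=B$. A path cover of a tree $T$ is a set of vertex-disjoint paths of $T$ (a single vertex counts as a path) covering all vertices of $T$; it is minimum if no path cover has fewer paths. $P:x_1,\ldots,x_\ell$ denotes the path with vertices $x_1,\dots,x_\ell$ and edges $x_ix_{i+1}$. *)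

theory Defs
  imports Main
begin

definition graph :: "'a set \<Rightarrow> ('a \<Rightarrow> 'a \<Rightarrow> bool) \<Rightarrow> bool" where
  "graph V E \<longleftrightarrow> finite V \<and>
     (\<forall>u v. E u v \<longrightarrow> u \<in> V \<and> v \<in> V \<and> u \<noteq> v \<and> E v u)"

definition restrict_adj :: "'a set \<Rightarrow> ('a \<Rightarrow> 'a \<Rightarrow> bool) \<Rightarrow> 'a \<Rightarrow> 'a \<Rightarrow> bool" where
  "restrict_adj W E u v \<longleftrightarrow> u \<in> W \<and> v \<in> W \<and> E u v"

definition delete_edge :: "('a \<Rightarrow> 'a \<Rightarrow> bool) \<Rightarrow> 'a \<Rightarrow> 'a \<Rightarrow> 'a \<Rightarrow> 'a \<Rightarrow> bool" where
  "delete_edge E a b u v \<longleftrightarrow> E u v \<and> \<not> ((u = a \<and> v = b) \<or> (u = b \<and> v = a))"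

definition connected_graph :: "'a set \<Rightarrow> ('a \<Rightarrow> 'a \<Rightarrow> bool) \<Rightarrow> bool" where
  "connected_graph V E \<longleftrightarrow> (\<forall>u\<in>V. \<forall>v\<in>V. E\<^sup>*\<^sup>* u v)"

definition is_cycle :: "('a \<Rightarrow> 'a \<Rightarrow> bool) \<Rightarrow> 'a list \<Rightarrow> bool" where
  "is_cycle E c \<longleftrightarrow> length c \<ge> 3 \<and> distinct c \<and>
     (\<forall>i. Suc i < length c \<longrightarrow> E (c ! i) (c ! Suc i)) \<and> E (last c) (hd c)"

definition tree :: "'a set \<Rightarrow> ('a \<Rightarrow> 'a \<Rightarrow> bool) \<Rightarrow> bool" where
  "tree V E \<longleftrightarrow> graph V E \<and> V \<noteq> {} \<and> connected_graph V E \<and> (\<nexists>c. is_cycle E c)"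

definition component :: "'a set \<Rightarrow> ('a \<Rightarrow> 'a \<Rightarrow> bool) \<Rightarrow> 'a \<Rightarrow> 'a set" where
  "component V E x = {v \<in> V. E\<^sup>*\<^sup>* x v}"

definition iso_induced :: "('a \<Rightarrow> 'a \<Rightarrow> bool) \<Rightarrow> 'a set \<Rightarrow> 'a set \<Rightarrow> bool" where
  "iso_induced E A B \<longleftrightarrow> (\<exists>f. bij_betw f A B \<and> (\<forall>u\<in>A. \<forall>v\<in>A. E u v \<longleftrightarrow> E (f u) (f v)))"

definition automorphism :: "'a set \<Rightarrow> ('a \<Rightarrow> 'a \<Rightarrow> bool) \<Rightarrow> ('a \<Rightarrow> 'a) \<Rightarrow> bool" where
  "automorphism V E \<phi> \<longleftrightarrow> bij_betw \<phi> V V \<and> (\<forall>u\<in>V. \<forall>v\<in>V. E u v \<longleftrightarrow> E (\<phi> u) (\<phi> v))"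

inductive_set zf_closure :: "('a \<Rightarrow> 'a \<Rightarrow> bool) \<Rightarrow> 'a set \<Rightarrow> 'a set"
  for E :: "'a \<Rightarrow> 'a \<Rightarrow> bool" and S :: "'a set" where
  init: "x \<in> S \<Longrightarrow> x \<in> zf_closure E S"
| force: "u \<in> zf_closure E S \<Longrightarrow> E u v \<Longrightarrow>
           (\<forall>w. E u w \<and> w \<noteq> v \<longrightarrow> w \<in> zf_closure E S) \<Longrightarrow> v \<in> zf_closure E S"

definition zero_forcing_set :: "'a set \<Rightarrow> ('a \<Rightarrow> 'a \<Rightarrow> bool) \<Rightarrow> 'a set \<Rightarrow> bool" where
  "zero_forcing_set V E S \<longleftrightarrow> S \<subseteq> V \<and> V \<subseteq> zf_closure E S"

definition min_zero_forcing_set :: "'a set \<Rightarrow> ('a \<Rightarrow> 'a \<Rightarrow> bool) \<Rightarrow> 'a set \<Rightarrow> bool" where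
  "min_zero_forcing_set V E S \<longleftrightarrow> zero_forcing_set V E S \<and>
     (\<forall>S'. zero_forcing_set V E S' \<longrightarrow> card S \<le> card S')"

definition iso_unique_zf :: "'a set \<Rightarrow> ('a \<Rightarrow> 'a \<Rightarrow> bool) \<Rightarrow> bool" where
  "iso_unique_zf V E \<longleftrightarrow> (\<forall>A B. min_zero_forcing_set V E A \<longrightarrow> min_zero_forcing_set V E B \<longrightarrow>
     (\<exists>\<phi>. automorphism V E \<phi> \<and> \<phi> ` A = B))"

text \<open>A path x_1,...,x_l is the list [x_1,...,x_l].\<close>
definition is_path :: "'a set \<Rightarrow> ('a \<Rightarrow> 'a \<Rightarrow> bool) \<Rightarrow> 'a list \<Rightarrow> bool" where
  "is_path V E xs \<longleftrightarrow> xs \<noteq> [] \<and> distinct xs \<and> set xs \<subseteq> V \<and>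
     (\<forall>i. Suc i < length xs \<longrightarrow> E (xs ! i) (xs ! Suc i))"

definition path_cover :: "'a set \<Rightarrow> ('a \<Rightarrow> 'a \<Rightarrow> bool) \<Rightarrow> 'a list set \<Rightarrow> bool" where
  "path_cover V E \<P> \<longleftrightarrow> (\<forall>P\<in>\<P>. is_path V E P) \<and>
     (\<forall>P\<in>\<P>. \<forall>Q\<in>\<P>. P \<noteq> Q \<longrightarrow> set P \<inter> set Q = {}) \<and>
     (\<Union>P\<in>\<P>. set P) = V"

definition min_path_cover :: "'a set \<Rightarrow> ('a \<Rightarrow> 'a \<Rightarrow> bool) \<Rightarrow> 'a list set \<Rightarrow> bool" where
  "min_path_cover V E \<P> \<longleftrightarrow> path_cover V E \<P> \<and>
     (\<forall>\<Q>. path_cover V E \<Q> \<longrightarrow> card \<P> \<le> card \<Q>)"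

end

theory Submission
  imports Defs
begin

lemma graphD: assumes "graph V E" "E u v" shows "u \<in> V" "v \<in> V" "u \<noteq> v" "E v u"
  using assms unfolding graph_def by blast+

lemma succ_rtranclp: "successively R xs \<Longrightarrow> xs \<noteq> [] \<Longrightarrow> R\<^sup>*\<^sup>* (hd xs) (last xs)"
proof (induction xs)
  case Nil then show ?case by simp
next
  case (Cons a xs)
  then show ?case
    by (cases xs) (auto simp: successively_Cons)
qed

lemma walk_path:
  assumes "R\<^sup>*\<^sup>* u v"
  shows "\<exists>xs. xs \<noteq> [] \<and> hd xs = u \<and> last xs = v \<and> distinct xs \<and> successively R xs"
  using assms
proof (induction rule: converse_rtranclp_induct)
  case base
  then show ?case by (intro exI[of _ "[v]"]) auto
next
  case (step u w)
  then obtain ys where ys: "ys \<noteq> []" "hd ys = w" "last ys = v" "distinct ys" "successively R ys" by blast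
  show ?case
  proof (cases "u \<in> set ys")
    case True
    then obtain ys1 ys2 where "ys = ys1 @ u # ys2" by (meson split_list)
    with ys show ?thesis
      by (intro exI[of _ "u # ys2"]) (auto simp: successively_append_iff)
  next
    case False
    with ys step(1) show ?thesis
      by (intro exI[of _ "u # ys"]) (auto simp: successively_Cons)
  qed
qed

lemma bridge:
  assumes "tree V E" "E u v"
  shows "\<not> (delete_edge E u v)\<^sup>*\<^sup>* u v"
proof
  assume "(delete_edge E u v)\<^sup>*\<^sup>* u v"
  then obtain xs where xs: "xs \<noteq> []" "hd xs = u" "last xs = v" "distinct xs"
     "successively (delete_edge E u v) xs" using walk_path by metis
  have g: "graph V E" using assms unfolding tree_def by blast
  have uv: "u \<noteq> v" "E v u" using graphD[OF g assms(2)] by auto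
  have "length xs \<ge> 3"
  proof (rule ccontr)
    assume "\<not> 3 \<le> length xs"
    then show False
    proof (cases xs)
      case (Cons a t)
      show ?thesis
      proof (cases t)
        case Nil then show ?thesis using xs uv Cons by simp
      next
        case (Cons b t')
        then have "t' = []" using \<open>\<not> 3 \<le> length xs\<close> \<open>xs = a # t\<close> by (cases t') auto
        then have "delete_edge E u v u v" using xs \<open>xs = a # t\<close> Cons by simp
        then show ?thesis by (simp add: delete_edge_def)
      qed
    qed (use xs in simp)
  qed
  moreover have "successively E xs"
    using xs(5) by (rule successively_mono) (simp add: delete_edge_def)
  ultimately have "is_cycle E xs" unfolding is_cycle_def
    using xs uv by (simp add: successively_conv_nth)
  then show False using assms(1) unfolding tree_def by blast
qed

lemma rtranclp_sym:
  assumes "\<And>x y. R x y \<Longrightarrow> R y x" "R\<^sup>*\<^sup>* x y"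
  shows "R\<^sup>*\<^sup>* y x"
  using assms(2)
proof (induction rule: rtranclp_induct)
  case base then show ?case by simp
next
  case (step y z)
  then show ?case by (meson assms(1) converse_rtranclp_into_rtranclp)
qed

lemma nth_walk:
  assumes "\<And>k. i \<le> k \<Longrightarrow> k < j \<Longrightarrow> R (f k) (f (Suc k))" "i \<le> j"
  shows "R\<^sup>*\<^sup>* (f i) (f j)"
  using assms
proof (induction j)
  case 0 then show ?case by simp
next
  case (Suc j)
  show ?case
  proof (cases "i = Suc j")
    case True then show ?thesis by simp
  next
    case False
    then have "R\<^sup>*\<^sup>* (f i) (f j)" using Suc by auto
    moreover have "R (f j) (f (Suc j))" using Suc False by auto
    ultimately show ?thesis by (rule rtranclp.rtrancl_into_rtrancl)
  qed
qed

lemma delete_edge_sym: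
  assumes "graph V E" "delete_edge E a b x y"
  shows "delete_edge E a b y x"
  using assms graphD(4)[OF assms(1)] unfolding delete_edge_def by blast

lemma restrict_adj_sym:
  assumes "graph V E" "restrict_adj W E x y"
  shows "restrict_adj W E y x"
  using assms graphD(4)[OF assms(1)] unfolding restrict_adj_def by blast

lemma edge_components_cover:
  assumes "tree V E" "E c d" "w \<in> V"
  shows "(delete_edge E c d)\<^sup>*\<^sup>* c w \<or> (delete_edge E c d)\<^sup>*\<^sup>* d w"
proof -
  have "E\<^sup>*\<^sup>* c w" using assms graphD(1) unfolding tree_def connected_graph_def graph_def by blast
  then show ?thesis
  proof (induction rule: rtranclp_induct)
    case base then show ?case by simp
  next
    case (step y z)
    show ?case
    proof (cases "(y = c \<and> z = d) \<or> (y = d \<and> z = c)")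
      case True then show ?thesis by auto
    next
      case False
      then have "delete_edge E c d y z" using step(2) unfolding delete_edge_def by blast
      then show ?thesis using step(3) by (meson rtranclp.rtrancl_into_rtrancl)
    qed
  qed
qed

lemma edge_components_disjoint:
  assumes "tree V E" "E c d" "(delete_edge E c d)\<^sup>*\<^sup>* c w" "(delete_edge E c d)\<^sup>*\<^sup>* d w"
  shows False
proof -
  have g: "graph V E" using assms(1) unfolding tree_def by blast
  have "(delete_edge E c d)\<^sup>*\<^sup>* w d"
    using rtranclp_sym[of "delete_edge E c d"] delete_edge_sym[OF g] assms(4) by blast
  then have "(delete_edge E c d)\<^sup>*\<^sup>* c d" using assms(3) by simp
  then show False using bridge[OF assms(1,2)] by blast
qed

lemma succ_delete:
  assumes "successively E xs" "u \<notin> set xs"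
  shows "successively (delete_edge E u a) xs"
  using assms by (induction xs) (auto simp: successively_Cons delete_edge_def)

lemma unique_path:
  assumes "tree V E" "successively E xs" "distinct xs" "successively E ys" "distinct ys"
    "xs \<noteq> []" "ys \<noteq> []" "hd xs = hd ys" "last xs = last ys"
  shows "xs = ys"
  using assms(2-)
proof (induction xs arbitrary: ys)
  case Nil then show ?case by simp
next
  case (Cons u xs)
  have g: "graph V E" using assms(1) unfolding tree_def by blast
  obtain ys' where ys: "ys = u # ys'" using Cons.prems by (cases ys) auto
  show ?case
  proof (cases xs)
    case Nil
    then have "last ys = u" using Cons.prems by simp
    then show ?thesis using Cons.prems ys Nil
      by (cases ys') (auto, metis last_in_set list.distinct(1))
  next
    case (Cons a r)
    have "ys' \<noteq> []"
    proof
      assume "ys' = []"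
      then have "last (u # xs) = u" using Cons.prems ys by simp
      then show False using Cons.prems(2) \<open>xs = a # r\<close> 
        by (metis distinct.simps(2) last_ConsR last_in_set list.distinct(1))
    qed
    then obtain b s where ys': "ys' = b # s" by (cases ys') auto
    show ?thesis
    proof (cases "a = b")
      case True
      have "xs = ys'"
        using Cons.IH[of ys'] Cons.prems ys ys' \<open>xs = a # r\<close> True by (auto simp: successively_Cons)
      then show ?thesis using ys by simp
    next
      case False
      let ?F = "delete_edge E u a"
      have Eua: "E u a" using Cons.prems \<open>xs = a # r\<close> by simp
      have Eub: "E u b" using Cons.prems ys ys' by simp
      have "successively ?F xs" using succ_delete[of E xs u a] Cons.prems by (auto simp: successively_Cons)
      then have w1: "?F\<^sup>*\<^sup>* a (last xs)" using succ_rtranclp[of ?F xs] \<open>xs = a # r\<close> by simp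
      have "successively ?F ys'" using succ_delete[of E ys' u a] Cons.prems ys by (auto simp: successively_Cons)
      then have "?F\<^sup>*\<^sup>* b (last ys')" using succ_rtranclp[of ?F ys'] ys' by simp
      then have w2: "?F\<^sup>*\<^sup>* (last xs) b"
        using rtranclp_sym[of ?F] delete_edge_sym[OF g] Cons.prems ys ys' \<open>xs = a # r\<close> by (metis last_ConsR list.distinct(1))
      have "?F b u" using Eub graphD[OF g Eub] False unfolding delete_edge_def by auto
      then have "?F\<^sup>*\<^sup>* a u" using w1 w2 by (meson rtranclp.rtrancl_into_rtrancl rtranclp_trans)
      then have "?F\<^sup>*\<^sup>* u a" using rtranclp_sym[of ?F] delete_edge_sym[OF g] by blast
      then show ?thesis using bridge[OF assms(1) Eua] by blast
    qed
  qed
qed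

lemma component_image:
  assumes bij: "bij_betw \<sigma> V V"
    and pres: "\<And>u v. u \<in> V \<Longrightarrow> v \<in> V \<Longrightarrow> F u v \<longleftrightarrow> F (\<sigma> u) (\<sigma> v)"
    and Fin: "\<And>u v. F u v \<Longrightarrow> u \<in> W \<and> v \<in> W"
    and WV: "W \<subseteq> V" and sW: "\<And>u. u \<in> V \<Longrightarrow> \<sigma> u \<in> W \<longleftrightarrow> u \<in> W"
    and a: "a \<in> W"
  shows "\<sigma> ` component W F a = component W F (\<sigma> a)"
proof
  show "\<sigma> ` component W F a \<subseteq> component W F (\<sigma> a)"
  proof
    fix z assume "z \<in> \<sigma> ` component W F a"
    then obtain v where v: "v \<in> W" "F\<^sup>*\<^sup>* a v" "z = \<sigma> v" unfolding component_def by auto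
    have "F\<^sup>*\<^sup>* (\<sigma> a) (\<sigma> v)" using v(2)
    proof (induction rule: rtranclp_induct)
      case base then show ?case by simp
    next
      case (step y z)
      then have "F (\<sigma> y) (\<sigma> z)" using pres Fin WV by blast
      then show ?case using step(3) by (meson rtranclp.rtrancl_into_rtrancl)
    qed
    then show "z \<in> component W F (\<sigma> a)" unfolding component_def using v sW WV by auto
  qed
next
  show "component W F (\<sigma> a) \<subseteq> \<sigma> ` component W F a"
  proof
    fix z assume "z \<in> component W F (\<sigma> a)"
    then have z: "z \<in> W" "F\<^sup>*\<^sup>* (\<sigma> a) z" unfolding component_def by auto
    have "\<exists>v. v \<in> W \<and> F\<^sup>*\<^sup>* a v \<and> z = \<sigma> v" using z(2)
    proof (induction rule: rtranclp_induct)
      case base then show ?case using a by auto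
    next
      case (step y z)
      then obtain v where v: "v \<in> W" "F\<^sup>*\<^sup>* a v" "y = \<sigma> v" by blast
      have "z \<in> V" using Fin step(2) WV by blast
      then obtain v' where v': "v' \<in> V" "z = \<sigma> v'" using bij unfolding bij_betw_def by blast
      have "F v v'" using pres[of v v'] step(2) v v' WV by auto
      moreover have "v' \<in> W" using Fin \<open>F v v'\<close> by blast
      ultimately show ?case using v v' by (intro exI[of _ v']) (auto intro: rtranclp.rtrancl_into_rtrancl)
    qed
    then show "z \<in> \<sigma> ` component W F a" unfolding component_def by auto
  qed
qed

lemma in_butlast: "x \<in> set xs \<Longrightarrow> x \<noteq> last xs \<Longrightarrow> x \<in> set (butlast xs)"
  by (induction xs) (auto split: if_splits)

inductive reach :: "('a \<Rightarrow> 'a \<Rightarrow> bool) \<Rightarrow> 'a set \<Rightarrow> 'a set \<Rightarrow> bool" for E S where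
  r0: "reach E S S"
| r1: "reach E S A \<Longrightarrow> u \<in> A \<Longrightarrow> E u v \<Longrightarrow> v \<notin> A \<Longrightarrow> (\<forall>w. E u w \<and> w \<noteq> v \<longrightarrow> w \<in> A)
        \<Longrightarrow> reach E S (insert v A)"

lemma reach_sub:
  assumes "graph V E" "S \<subseteq> V" "reach E S A"
  shows "S \<subseteq> A \<and> A \<subseteq> V"
  using assms(3)
proof induction
  case r0 then show ?case using assms(2) by blast
next
  case (r1 A u v)
  have "v \<in> V" using graphD(2)[OF assms(1) r1.hyps(3)] .
  then show ?case using r1.IH by blast
qed

lemma reach_inv:
  assumes g: "graph V E" and SV: "S \<subseteq> V" and "reach E S A"
  shows "\<exists>g. (\<forall>s\<in>S. g s \<noteq> [] \<and> hd (g s) = s \<and> distinct (g s) \<and> set (g s) \<subseteq> V \<and> successively E (g s))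
     \<and> (\<forall>s\<in>S. \<forall>t\<in>S. s \<noteq> t \<longrightarrow> set (g s) \<inter> set (g t) = {})
     \<and> (\<Union>s\<in>S. set (g s)) = A
     \<and> (\<forall>s\<in>S. \<forall>x\<in>set (butlast (g s)). \<forall>w. E x w \<longrightarrow> w \<in> A)"
  using assms(3)
proof induction
  case r0
  show ?case using SV by (intro exI[of _ "\<lambda>s. [s]"]) auto
next
  case (r1 A u v)
  then obtain g where G1: "\<forall>s\<in>S. g s \<noteq> [] \<and> hd (g s) = s \<and> distinct (g s) \<and> set (g s) \<subseteq> V \<and> successively E (g s)"
     and G2: "\<forall>s\<in>S. \<forall>t\<in>S. s \<noteq> t \<longrightarrow> set (g s) \<inter> set (g t) = {}"
     and G3: "(\<Union>s\<in>S. set (g s)) = A"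
     and G4: "\<forall>s\<in>S. \<forall>x\<in>set (butlast (g s)). \<forall>w. E x w \<longrightarrow> w \<in> A" by blast
  obtain s0 where s0: "s0 \<in> S" "u \<in> set (g s0)" using G3 r1.hyps(2) by blast
  have ne: "g s0 \<noteq> []" using G1 s0 by blast
  have ulast: "u = last (g s0)"
  proof (rule ccontr)
    assume "u \<noteq> last (g s0)"
    then have "u \<in> set (butlast (g s0))" using s0(2) in_butlast by metis
    then show False using G4 s0 r1.hyps by blast
  qed
  have vV: "v \<in> V" using graphD[OF g r1.hyps(3)] by blast
  have vnot: "\<And>s. s \<in> S \<Longrightarrow> v \<notin> set (g s)" using G3 r1.hyps(4) by blast
  define g' where "g' = g(s0 := g s0 @ [v])"
  have P1: "\<forall>s\<in>S. g' s \<noteq> [] \<and> hd (g' s) = s \<and> distinct (g' s) \<and> set (g' s) \<subseteq> V \<and> successively E (g' s)"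
  proof
    fix s assume s: "s \<in> S"
    show "g' s \<noteq> [] \<and> hd (g' s) = s \<and> distinct (g' s) \<and> set (g' s) \<subseteq> V \<and> successively E (g' s)"
    proof (cases "s = s0")
      case True
      then show ?thesis using G1 s vV vnot[OF s] ne ulast r1.hyps(3)
        by (auto simp: g'_def successively_append_iff)
    next
      case False then show ?thesis using G1 s by (simp add: g'_def)
    qed
  qed
  have P2: "\<forall>s\<in>S. \<forall>t\<in>S. s \<noteq> t \<longrightarrow> set (g' s) \<inter> set (g' t) = {}"
    using G2 vnot unfolding g'_def by auto
  have P3: "(\<Union>s\<in>S. set (g' s)) = insert v A"
  proof
    show "(\<Union>s\<in>S. set (g' s)) \<subseteq> insert v A"
    proof
      fix x assume "x \<in> (\<Union>s\<in>S. set (g' s))"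
      then obtain s where s: "s \<in> S" "x \<in> set (g' s)" by blast
      show "x \<in> insert v A"
      proof (cases "s = s0")
        case True
        then have "x \<in> set (g s0) \<or> x = v" using s(2) by (auto simp: g'_def)
        then show ?thesis using G3 s0(1) by blast
      next
        case False
        then have "x \<in> set (g s)" using s(2) by (simp add: g'_def)
        then show ?thesis using G3 s(1) by blast
      qed
    qed
    show "insert v A \<subseteq> (\<Union>s\<in>S. set (g' s))"
    proof
      fix x assume "x \<in> insert v A"
      then consider "x = v" | "x \<in> A" by blast
      then show "x \<in> (\<Union>s\<in>S. set (g' s))"
      proof cases
        case 1
        then have "x \<in> set (g' s0)" by (simp add: g'_def)
        then show ?thesis using s0(1) by blast
      next
        case 2
        then obtain s where s: "s \<in> S" "x \<in> set (g s)" using G3 by blast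
        then have "x \<in> set (g' s)" by (auto simp: g'_def)
        then show ?thesis using s(1) by blast
      qed
    qed
  qed
  have P4: "\<forall>s\<in>S. \<forall>x\<in>set (butlast (g' s)). \<forall>w. E x w \<longrightarrow> w \<in> insert v A"
  proof (intro ballI allI impI)
    fix s x w assume s: "s \<in> S" and x: "x \<in> set (butlast (g' s))" and xw: "E x w"
    show "w \<in> insert v A"
    proof (cases "s = s0")
      case False then show ?thesis using G4 s x xw by (auto simp: g'_def)
    next
      case True
      then have x': "x \<in> set (g s0)" using x by (simp add: g'_def)
      show ?thesis
      proof (cases "x = u")
        case True then show ?thesis using r1.hyps(5) xw by blast
      next
        case False
        then have "x \<in> set (butlast (g s0))" using x' ulast in_butlast by metis
        then show ?thesis using G4 s0 xw by blast
      qed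
    qed
  qed
  show ?case using P1 P2 P3 P4 by blast
qed

lemma zf_lower:
  assumes g: "graph V E" and zf: "zero_forcing_set V E S"
  shows "\<exists>\<Q>. path_cover V E \<Q> \<and> card \<Q> \<le> card S"
proof -
  have SV: "S \<subseteq> V" using zf unfolding zero_forcing_set_def by blast
  have fin: "finite V" using g unfolding graph_def by blast
  have "\<exists>A. reach E S A \<and> (\<forall>B. reach E S B \<longrightarrow> card B \<le> card A)"
  proof (rule Lattices_Big.ex_has_greatest_nat[of "reach E S" S card "Suc (card V)"])
    show "reach E S S" by (rule r0)
    show "\<forall>y. reach E S y \<longrightarrow> card y < Suc (card V)"
      using reach_sub[OF g SV] fin by (simp add: card_mono less_Suc_eq_le)
  qed
  then obtain A where A: "reach E S A" and Amax: "\<And>B. reach E S B \<Longrightarrow> card B \<le> card A" by blast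
  have AV: "S \<subseteq> A" "A \<subseteq> V" using reach_sub[OF g SV A] by auto
  have finA: "finite A" using AV fin finite_subset by blast
  have "zf_closure E S \<subseteq> A"
  proof
    fix x assume "x \<in> zf_closure E S"
    then show "x \<in> A"
    proof induction
      case (init x) then show ?case using AV by blast
    next
      case (force u v)
      show ?case
      proof (rule ccontr)
        assume "v \<notin> A"
        then have "reach E S (insert v A)" using force A by (intro r1) blast+
        then have "card (insert v A) \<le> card A" by (rule Amax)
        then show False using \<open>v \<notin> A\<close> finA by simp
      qed
    qed
  qed
  then have AV': "A = V" using zf AV unfolding zero_forcing_set_def by blast
  obtain gg where G1: "\<forall>s\<in>S. gg s \<noteq> [] \<and> hd (gg s) = s \<and> distinct (gg s) \<and> set (gg s) \<subseteq> V \<and> successively E (gg s)"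
     and G2: "\<forall>s\<in>S. \<forall>t\<in>S. s \<noteq> t \<longrightarrow> set (gg s) \<inter> set (gg t) = {}"
     and G3: "(\<Union>s\<in>S. set (gg s)) = A"
    using reach_inv[OF g SV A] by blast
  have "path_cover V E (gg ` S)"
    unfolding path_cover_def
  proof (intro conjI)
    show "\<forall>P\<in>gg ` S. is_path V E P" using G1 unfolding is_path_def by (auto simp: successively_conv_nth)
    show "\<forall>P\<in>gg ` S. \<forall>Q\<in>gg ` S. P \<noteq> Q \<longrightarrow> set P \<inter> set Q = {}"
    proof (intro ballI impI)
      fix P Q assume "P \<in> gg ` S" "Q \<in> gg ` S" "P \<noteq> Q"
      then obtain s t where "s \<in> S" "t \<in> S" "P = gg s" "Q = gg t" by blast
      moreover have "s \<noteq> t" using \<open>P \<noteq> Q\<close> \<open>P = gg s\<close> \<open>Q = gg t\<close> by blast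
      ultimately show "set P \<inter> set Q = {}" using G2 by simp
    qed
    show "(\<Union>P\<in>gg ` S. set P) = V" using G3 AV' by simp
  qed
  moreover have "card (gg ` S) \<le> card S"
    using SV fin finite_subset card_image_le by blast
  ultimately show ?thesis by blast
qed

lemma succ_delete2:
  assumes "successively E xs" "b \<notin> set xs"
  shows "successively (delete_edge E a b) xs"
  using assms by (induction xs) (auto simp: successively_Cons delete_edge_def)

lemma succ_walk_hd:
  assumes "successively R xs" "x \<in> set xs"
  shows "R\<^sup>*\<^sup>* (hd xs) x"
  using assms
proof (induction xs)
  case Nil then show ?case by simp
next
  case (Cons a xs)
  show ?case
  proof (cases "x = a")
    case True then show ?thesis by simp
  next
    case False
    then have xs: "xs \<noteq> []" "x \<in> set xs" using Cons.prems by auto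
    then have "R a (hd xs)" "successively R xs" using Cons.prems(1) by (auto simp: successively_Cons)
    then show ?thesis using Cons.IH xs by (simp add: converse_rtranclp_into_rtranclp)
  qed
qed

lemma succ_walk:
  assumes "successively R xs" "\<And>x y. R x y \<Longrightarrow> R y x" "x \<in> set xs" "y \<in> set xs"
  shows "R\<^sup>*\<^sup>* x y"
proof -
  have "R\<^sup>*\<^sup>* (hd xs) x" "R\<^sup>*\<^sup>* (hd xs) y" using succ_walk_hd assms by metis+
  then show ?thesis using rtranclp_sym[of R, OF assms(2)] by (meson rtranclp_trans)
qed

lemma zf_closed:
  assumes "u \<in> zf_closure E S" "E u v" "v \<notin> zf_closure E S"
  shows "\<exists>w. E u w \<and> w \<noteq> v \<and> w \<notin> zf_closure E S"
proof (rule ccontr)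
  assume "\<not> ?thesis"
  then have "\<forall>w. E u w \<and> w \<noteq> v \<longrightarrow> w \<in> zf_closure E S" by blast
  then have "v \<in> zf_closure E S" by (rule zf_closure.force[OF assms(1,2)])
  then show False using assms(3) by blast
qed

lemma zf_upper:
  assumes T: "tree V E" and pc: "path_cover V E \<Q>"
  shows "zero_forcing_set V E (hd ` \<Q>)"
proof -
  define S where "S = hd ` \<Q>"
  define A where "A = zf_closure E S"
  have g: "graph V E" using T unfolding tree_def by blast
  have fin: "finite V" using g unfolding graph_def by blast
  have paths: "\<And>Q. Q \<in> \<Q> \<Longrightarrow> Q \<noteq> [] \<and> distinct Q \<and> set Q \<subseteq> V \<and> successively E Q"
    using pc unfolding path_cover_def is_path_def by (auto simp: successively_conv_nth)
  have disj: "\<And>Q Q'. Q \<in> \<Q> \<Longrightarrow> Q' \<in> \<Q> \<Longrightarrow> Q \<noteq> Q' \<Longrightarrow> set Q \<inter> set Q' = {}"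
    using pc unfolding path_cover_def by blast
  have cov: "(\<Union>P\<in>\<Q>. set P) = V" using pc unfolding path_cover_def by (elim conjE)
  have cover: "\<exists>Q\<in>\<Q>. v \<in> set Q" if "v \<in> V" for v
    using that cov[symmetric] by (simp add: UN_iff)
  have SV: "S \<subseteq> V"
  proof
    fix s assume "s \<in> S"
    then obtain Q where "Q \<in> \<Q>" "s = hd Q" unfolding S_def by blast
    then show "s \<in> V" using paths[of Q] by (metis hd_in_set subsetD)
  qed
  have SA: "S \<subseteq> A" unfolding A_def
  proof
    fix x assume "x \<in> S" then show "x \<in> zf_closure E S" by (rule zf_closure.init)
  qed
  have head: "\<exists>h w. h \<in> set Q \<and> h \<in> A \<and> E h w \<and> w \<notin> A \<and> w \<notin> set Q"
    if Q: "Q \<in> \<Q>" and inc: "x \<in> set Q" "x \<notin> A" for Q x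
  proof -
    have PQ: "Q \<noteq> []" "distinct Q" "set Q \<subseteq> V" "successively E Q" using paths[OF Q] by auto
    define i where "i = (LEAST i. i < length Q \<and> Q ! i \<notin> A)"
    have ex: "\<exists>i. i < length Q \<and> Q ! i \<notin> A" using inc by (metis in_set_conv_nth)
    have i: "i < length Q" "Q ! i \<notin> A" using LeastI_ex[OF ex] unfolding i_def by auto
    have before: "Q ! k \<in> A" if "k < i" for k
    proof -
      have "\<not> (k < length Q \<and> Q ! k \<notin> A)" using not_less_Least[of k] that unfolding i_def by blast
      then show ?thesis using that i(1) by auto
    qed
    have "hd Q \<in> S" unfolding S_def using Q by (rule imageI)
    then have "Q ! 0 \<in> A" using SA PQ(1) by (simp add: hd_conv_nth subset_iff)
    then have i0: "i \<noteq> 0" using i(2) by metis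
    define h where "h = Q ! (i - 1)"
    have hA: "h \<in> A" using before i0 unfolding h_def by simp
    have Ehn: "E h (Q ! i)" using successively_nth[OF PQ(4), of "i - 1"] i i0 unfolding h_def by simp
    obtain w where w: "E h w" "w \<noteq> Q ! i" "w \<notin> A"
      using zf_closed[of h E S "Q ! i"] hA Ehn i(2) unfolding A_def by blast
    have "w \<notin> set Q"
    proof
      assume "w \<in> set Q"
      then obtain j where j: "j < length Q" "Q ! j = w" by (metis in_set_conv_nth)
      have "j \<ge> i" using before j w(3) by (meson not_le)
      moreover have "j \<noteq> i" using j w(2) by blast
      ultimately have ji: "i - 1 < j" "Suc (i - 1) < j" using i0 by auto
      let ?F = "delete_edge E h w"
      have "?F\<^sup>*\<^sup>* (Q ! (i - 1)) (Q ! j)"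
      proof (rule nth_walk)
        fix k assume k: "i - 1 \<le> k" "k < j"
        have E: "E (Q ! k) (Q ! Suc k)" using successively_nth[OF PQ(4)] k j by simp
        have n1: "Q ! k = h \<longleftrightarrow> k = i - 1" unfolding h_def
          using nth_eq_iff_index_eq[OF PQ(2)] k j i by auto
        have n2: "Q ! Suc k = w \<longleftrightarrow> Suc k = j"
          using nth_eq_iff_index_eq[OF PQ(2)] k j by auto
        have n3: "Q ! k \<noteq> w" using nth_eq_iff_index_eq[OF PQ(2)] k j by auto
        show "?F (Q ! k) (Q ! Suc k)" unfolding delete_edge_def using E n1 n2 n3 ji by auto
      qed (use ji in auto)
      then have "?F\<^sup>*\<^sup>* h w" using j unfolding h_def by simp
      then show False using bridge[OF T w(1)] by blast
    qed
    moreover have "h \<in> set Q" unfolding h_def using i by simp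
    ultimately show ?thesis using hA w by blast
  qed
  define good where "good h w \<longleftrightarrow> h \<in> A \<and> w \<notin> A \<and> E h w \<and> (\<exists>Q\<in>\<Q>. h \<in> set Q \<and> w \<notin> set Q)" for h w
  define Y where "Y h w = component V (delete_edge E h w) w" for h w
  have step: "\<exists>h' w'. good h' w' \<and> Y h' w' \<subset> Y h w" if gd: "good h w" for h w
  proof -
    obtain Q where Q: "Q \<in> \<Q>" "h \<in> set Q" "w \<notin> set Q" and hw: "h \<in> A" "w \<notin> A" "E h w"
      using gd unfolding good_def by blast
    have wV: "w \<in> V" using graphD[OF g hw(3)] by blast
    obtain Q' where Q': "Q' \<in> \<Q>" "w \<in> set Q'" using cover[OF wV] by blast
    have "Q \<noteq> Q'" using Q Q' by blast
    then have hQ': "h \<notin> set Q'" using disj[OF Q(1) Q'(1)] Q(2) by blast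
    obtain h' w' where h': "h' \<in> set Q'" "h' \<in> A" "E h' w'" "w' \<notin> A" "w' \<notin> set Q'"
      using head[OF Q'(1) Q'(2) hw(2)] by blast
    have gd': "good h' w'" unfolding good_def using h' Q'(1) by blast
    let ?F = "delete_edge E h w"
    let ?F' = "delete_edge E h' w'"
    have symF: "\<And>x y. ?F x y \<Longrightarrow> ?F y x" using delete_edge_sym[OF g] by blast
    have symF': "\<And>x y. ?F' x y \<Longrightarrow> ?F' y x" using delete_edge_sym[OF g] by blast
    have PQ': "successively E Q'" using paths[OF Q'(1)] by blast
    have hh: "h' \<noteq> h" "h' \<noteq> w" using h' hQ' hw by auto
    have "?F\<^sup>*\<^sup>* w h'"
      using succ_walk[OF succ_delete[OF PQ' hQ'] symF] Q'(2) h'(1) by blast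
    moreover have "?F h' w'" using h'(3) hh unfolding delete_edge_def by blast
    ultimately have Fww': "?F\<^sup>*\<^sup>* w w'" by (meson rtranclp.rtrancl_into_rtrancl)
    have "?F'\<^sup>*\<^sup>* h' w"
      using succ_walk[OF succ_delete2[OF PQ' h'(5)] symF'] Q'(2) h'(1) by blast
    moreover have "?F' w h" using hw(3) graphD[OF g hw(3)] hh unfolding delete_edge_def by blast
    ultimately have F'h'h: "?F'\<^sup>*\<^sup>* h' h" by (meson rtranclp.rtrancl_into_rtrancl)
    have nob: "\<not> ?F'\<^sup>*\<^sup>* w' h'"
      using bridge[OF T h'(3)] rtranclp_sym[of ?F', OF symF'] by blast
    have sub: "?F\<^sup>*\<^sup>* w z" if "?F'\<^sup>*\<^sup>* w' z" for z
      using that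
    proof (induction rule: rtranclp_induct)
      case base then show ?case using Fww' .
    next
      case (step y z)
      show ?case
      proof (cases "?F y z")
        case True then show ?thesis using step(3) by (meson rtranclp.rtrancl_into_rtrancl)
      next
        case False
        then have "(y = h \<and> z = w) \<or> (y = w \<and> z = h)" using step(2) unfolding delete_edge_def by blast
        then have "?F'\<^sup>*\<^sup>* w' h" using step(1,2) by (metis rtranclp.rtrancl_into_rtrancl)
        then have "?F'\<^sup>*\<^sup>* w' h'" using F'h'h rtranclp_sym[of ?F', OF symF'] by (meson rtranclp_trans)
        then show ?thesis using nob by blast
      qed
    qed
    have "Y h' w' \<subseteq> Y h w" unfolding Y_def component_def using sub by blast
    moreover have "h' \<in> Y h w" unfolding Y_def component_def
      using \<open>?F\<^sup>*\<^sup>* w h'\<close> graphD[OF g h'(3)] by blast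
    moreover have "h' \<notin> Y h' w'" unfolding Y_def component_def using nob by blast
    ultimately show ?thesis using gd' by blast
  qed
  have desc: "\<forall>h w. good h w \<longrightarrow> n \<le> card (Y h w)" for n
  proof (induction n)
    case 0 then show ?case by simp
  next
    case (Suc n)
    show ?case
    proof (intro allI impI)
      fix h w assume "good h w"
      then obtain h' w' where "good h' w'" "Y h' w' \<subset> Y h w" using step by blast
      moreover have "finite (Y h w)" unfolding Y_def component_def using fin by simp
      ultimately have "card (Y h' w') < card (Y h w)" by (simp add: psubset_card_mono)
      then show "Suc n \<le> card (Y h w)" using Suc \<open>good h' w'\<close> by fastforce
    qed
  qed
  have nogood: "\<not> good h w" for h w
  proof
    assume "good h w"
    then have "Suc (card V) \<le> card (Y h w)" using desc by blast
    moreover have "card (Y h w) \<le> card V" unfolding Y_def component_def using fin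
      by (simp add: card_mono)
    ultimately show False by simp
  qed
  have "V \<subseteq> A"
  proof
    fix v assume v: "v \<in> V"
    show "v \<in> A"
    proof (rule ccontr)
      assume "v \<notin> A"
      obtain Q where "Q \<in> \<Q>" "v \<in> set Q" using cover[OF v] by blast
      then obtain h w where "h \<in> set Q" "h \<in> A" "E h w" "w \<notin> A" "w \<notin> set Q"
        using head \<open>v \<notin> A\<close> by blast
      then have "good h w" unfolding good_def using \<open>Q \<in> \<Q>\<close> by blast
      then show False using nogood by blast
    qed
  qed
  then show ?thesis unfolding zero_forcing_set_def using SV unfolding S_def A_def by blast
qed

definition leaf :: "'a set \<Rightarrow> ('a \<Rightarrow> 'a \<Rightarrow> bool) \<Rightarrow> 'a \<Rightarrow> bool" where
  "leaf V E v \<longleftrightarrow> v \<in> V \<and> (\<forall>w1 w2. E v w1 \<and> E v w2 \<longrightarrow> w1 = w2)"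

lemma leaf_exists:
  assumes T: "tree V E"
  shows "\<exists>v. leaf V E v"
proof (rule ccontr)
  assume "\<nexists>v. leaf V E v"
  then have nl: "\<And>v. v \<in> V \<Longrightarrow> \<exists>w1 w2. E v w1 \<and> E v w2 \<and> w1 \<noteq> w2" unfolding leaf_def by blast
  have g: "graph V E" and ne: "V \<noteq> {}" and nocyc: "\<nexists>c. is_cycle E c" using T unfolding tree_def by auto
  have fin: "finite V" using g unfolding graph_def by blast
  have ext: "\<exists>xs. length xs = Suc (Suc n) \<and> distinct xs \<and> set xs \<subseteq> V \<and> successively E xs" for n
  proof (induction n)
    case 0
    obtain v where v: "v \<in> V" using ne by blast
    then obtain w where vw: "E v w" using nl by blast
    then have "w \<in> V" "v \<noteq> w" using graphD[OF g vw] by auto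
    then show ?case using v vw by (intro exI[of _ "[v, w]"]) auto
  next
    case (Suc n)
    then obtain xs where xs: "length xs = Suc (Suc n)" "distinct xs" "set xs \<subseteq> V" "successively E xs" by blast
    define y where "y = last xs"
    define z where "z = xs ! (length xs - 2)"
    have yn: "y = xs ! (length xs - 1)" unfolding y_def using xs(1) by (intro last_conv_nth) auto
    have Ezy: "E z y" unfolding z_def yn using successively_nth[OF xs(4), of "length xs - 2"] xs(1)
      by (simp add: Suc_diff_Suc numeral_2_eq_2)
    have "xs \<noteq> []" using xs(1) by auto
    then have "y \<in> set xs" unfolding y_def by simp
    then have yV: "y \<in> V" using xs(3) by blast
    obtain w1 w2 where ww: "E y w1" "E y w2" "w1 \<noteq> w2" using nl[OF yV] by blast
    obtain w where w: "E y w" "w \<noteq> z"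
    proof (cases "w1 = z")
      case True then show thesis using that ww by blast
    next
      case False then show thesis using that ww by blast
    qed
    show ?case
    proof (cases "w \<in> set xs")
      case True
      then obtain i where i: "i < length xs" "xs ! i = w" by (metis in_set_conv_nth)
      have "i \<noteq> length xs - 1" using i w graphD[OF g w(1)] yn by auto
      moreover have "i \<noteq> length xs - 2" using i w z_def by auto
      ultimately have i3: "i + 3 \<le> length xs" using i(1) by linarith
      define c where "c = drop i xs"
      have "successively E c"
        using xs(4) unfolding c_def by (metis append_take_drop_id successively_append_iff)
      moreover have "length c \<ge> 3" "distinct c" using i3 xs(2) unfolding c_def by auto
      moreover have "last c = y" "hd c = w" unfolding c_def y_def using i
        by (auto simp: hd_drop_conv_nth)
      ultimately have "is_cycle E c" unfolding is_cycle_def using w(1)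
        by (simp add: successively_conv_nth)
      then show ?thesis using nocyc by blast
    next
      case False
      have "w \<in> V" using graphD[OF g w(1)] by blast
      then show ?thesis using xs False w(1) unfolding y_def
        by (intro exI[of _ "xs @ [w]"]) (auto simp: successively_append_iff)
    qed
  qed
  obtain xs where xs: "length xs = Suc (Suc (card V))" "distinct xs" "set xs \<subseteq> V" using ext by blast
  have "length xs = card (set xs)" using xs(2) by (simp add: distinct_card)
  also have "\<dots> \<le> card V" using card_mono[OF fin xs(3)] .
  finally show False using xs(1) by simp
qed

lemma adjacent_leaves:
  assumes T: "tree V E" and x: "leaf V E x" and y: "leaf V E y" and xy: "E x y"
  shows "V = {x, y}"
proof -
  have g: "graph V E" using T unfolding tree_def by blast
  have xV: "x \<in> V" using x unfolding leaf_def by blast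
  have Eyx: "E y x" using graphD[OF g xy] by blast
  have "V \<subseteq> {x, y}"
  proof
    fix z assume "z \<in> V"
    then have "E\<^sup>*\<^sup>* x z" using T xV unfolding tree_def connected_graph_def by blast
    then show "z \<in> {x, y}"
    proof (induction rule: rtranclp_induct)
      case base then show ?case by simp
    next
      case (step a b)
      then show ?case using x y xy Eyx unfolding leaf_def by blast
    qed
  qed
  moreover have "y \<in> V" using graphD[OF g xy] by blast
  ultimately show ?thesis using xV by blast
qed

lemma strip_tree:
  assumes T: "tree V E" and noadj: "\<nexists>x y. leaf V E x \<and> leaf V E y \<and> E x y"
    and c2: "card V \<ge> 2"
  shows "tree (V - {v. leaf V E v}) (restrict_adj (V - {v. leaf V E v}) E)"
proof -
  define L where "L = {v. leaf V E v}"
  define F where "F = restrict_adj (V - L) E"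
  have g: "graph V E" and fin: "finite V" using T unfolding tree_def graph_def by auto
  have gF: "graph (V - L) F" unfolding graph_def
  proof (intro conjI)
    show "finite (V - L)" using fin by simp
  next
    show "\<forall>u v. F u v \<longrightarrow> u \<in> V - L \<and> v \<in> V - L \<and> u \<noteq> v \<and> F v u"
    proof (intro allI impI)
    fix u v assume "F u v"
    then have uv: "u \<in> V - L" "v \<in> V - L" "E u v" unfolding F_def restrict_adj_def by auto
    have "u \<noteq> v" "E v u" using graphD[OF g uv(3)] by auto
    then show "u \<in> V - L \<and> v \<in> V - L \<and> u \<noteq> v \<and> F v u" using uv unfolding F_def restrict_adj_def by auto
    qed
  qed
  have "V \<noteq> {}" using c2 by (metis card.empty not_numeral_le_zero)
  then obtain a where a: "a \<in> V" by blast
  have "card (V - {a}) = card V - 1" using a by (rule card_Diff_singleton)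
  then have "card (V - {a}) \<noteq> 0" using c2 by simp
  then have "V - {a} \<noteq> {}" by (metis card.empty)
  then obtain b where "b \<in> V - {a}" by blast
  then have ab: "a \<in> V" "b \<in> V" "a \<noteq> b" using a by auto
  have "E\<^sup>*\<^sup>* a b" using T ab unfolding tree_def connected_graph_def by blast
  then obtain a' where aa': "E a a'" using ab(3) by (metis converse_rtranclpE)
  have "a' \<in> V" using graphD[OF g aa'] by blast
  have "\<not> (leaf V E a \<and> leaf V E a')" using noadj aa' by blast
  then have ne: "V - L \<noteq> {}" using ab(1) \<open>a' \<in> V\<close> unfolding L_def by blast
  have nocyc: "\<nexists>c. is_cycle F c"
  proof
    assume "\<exists>c. is_cycle F c"
    then obtain c where "is_cycle F c" by blast
    then have "is_cycle E c" unfolding is_cycle_def F_def restrict_adj_def by blast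
    then show False using T unfolding tree_def by blast
  qed
  have conn: "F\<^sup>*\<^sup>* u v" if u: "u \<in> V - L" and v: "v \<in> V - L" for u v
  proof -
    have "E\<^sup>*\<^sup>* u v" using T u v unfolding tree_def connected_graph_def by blast
    have "(z \<notin> L \<longrightarrow> F\<^sup>*\<^sup>* u z) \<and> (z \<in> L \<longrightarrow> (\<exists>n. E z n \<and> n \<notin> L \<and> F\<^sup>*\<^sup>* u n))" if "E\<^sup>*\<^sup>* u z" for z
      using that
    proof (induction rule: rtranclp_induct)
      case base then show ?case using u by simp
    next
      case (step y z)
      have yz: "y \<in> V" "z \<in> V" "E z y" using graphD[OF g step(2)] by auto
      show ?case
      proof (cases "y \<in> L")
        case False
        then have Fy: "F\<^sup>*\<^sup>* u y" using step(3) by blast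
        show ?thesis
        proof (cases "z \<in> L")
          case False
          then have "F y z" unfolding F_def restrict_adj_def using \<open>y \<notin> L\<close> yz step(2) by blast
          then show ?thesis using Fy False by (meson rtranclp.rtrancl_into_rtrancl)
        next
          case True then show ?thesis using Fy yz \<open>y \<notin> L\<close> by blast
        qed
      next
        case True
        then obtain n where n: "E y n" "n \<notin> L" "F\<^sup>*\<^sup>* u n" using step(3) by blast
        have "n = z" using True n(1) step(2) unfolding L_def leaf_def by blast
        moreover have "z \<notin> L" using True step(2) noadj unfolding L_def by blast
        ultimately show ?thesis using n by blast
      qed
    qed
    then show ?thesis using \<open>E\<^sup>*\<^sup>* u v\<close> v by blast
  qed
  show ?thesis unfolding tree_def connected_graph_def using gF ne nocyc conn
    unfolding F_def L_def by blast
qed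

lemma leaf_auto:
  assumes g: "graph V E" and a: "automorphism V E \<psi>" and v: "v \<in> V"
  shows "leaf V E (\<psi> v) \<longleftrightarrow> leaf V E v"
proof -
  have bij: "bij_betw \<psi> V V" and pres: "\<And>u w. u \<in> V \<Longrightarrow> w \<in> V \<Longrightarrow> E u w \<longleftrightarrow> E (\<psi> u) (\<psi> w)"
    using a unfolding automorphism_def by auto
  have inj: "inj_on \<psi> V" and im: "\<psi> ` V = V" using bij unfolding bij_betw_def by auto
  have pv: "\<psi> v \<in> V" using v im by blast
  show ?thesis
  proof
    assume l: "leaf V E (\<psi> v)"
    show "leaf V E v" unfolding leaf_def
    proof (intro conjI v allI impI)
      fix w1 w2 assume "E v w1 \<and> E v w2"
      then have w: "E v w1" "E v w2" by auto
      then have w': "w1 \<in> V" "w2 \<in> V" using graphD(2)[OF g] by auto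
      then have "E (\<psi> v) (\<psi> w1)" "E (\<psi> v) (\<psi> w2)" using pres v w' w by auto
      then have "\<psi> w1 = \<psi> w2" using l unfolding leaf_def by blast
      then show "w1 = w2" using inj w' unfolding inj_on_def by blast
    qed
  next
    assume l: "leaf V E v"
    show "leaf V E (\<psi> v)" unfolding leaf_def
    proof (intro conjI pv allI impI)
      fix w1 w2 assume "E (\<psi> v) w1 \<and> E (\<psi> v) w2"
      then have w: "E (\<psi> v) w1" "E (\<psi> v) w2" by auto
      then have w': "w1 \<in> V" "w2 \<in> V" using graphD(2)[OF g] by auto
      then have "w1 \<in> \<psi> ` V" "w2 \<in> \<psi> ` V" using im by auto
      then obtain u1 u2 where u: "u1 \<in> V" "u2 \<in> V" "w1 = \<psi> u1" "w2 = \<psi> u2" by (meson imageE)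
      then have "E v u1" "E v u2" using pres v w by auto
      then show "w1 = w2" using l u unfolding leaf_def by blast
    qed
  qed
qed

lemma fixed_or_flip:
  assumes "tree V E" "automorphism V E \<psi>"
  shows "(\<exists>v\<in>V. \<psi> v = v) \<or> (\<exists>c d. E c d \<and> \<psi> c = d \<and> \<psi> d = c)"
  using assms
proof (induction "card V" arbitrary: V E rule: less_induct)
  case less
  have g: "graph V E" and fin: "finite V" and ne: "V \<noteq> {}" using less.prems unfolding tree_def graph_def by auto
  have bij: "bij_betw \<psi> V V" and pres: "\<And>u w. u \<in> V \<Longrightarrow> w \<in> V \<Longrightarrow> E u w \<longleftrightarrow> E (\<psi> u) (\<psi> w)"
    using less.prems(2) unfolding automorphism_def by auto
  have inj: "inj_on \<psi> V" and im: "\<psi> ` V = V" using bij unfolding bij_betw_def by auto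
  show ?case
  proof (cases "card V \<ge> 2")
    case False
    moreover have "card V \<noteq> 0" using ne fin by simp
    ultimately have "card V = 1" by arith
    then obtain v where "V = {v}" by (metis card_1_singletonE)
    then show ?thesis using im by auto
  next
    case c2: True
    have psiV: "\<psi> u \<in> V" if "u \<in> V" for u
    proof -
      have "\<psi> u \<in> \<psi> ` V" using that by (rule imageI)
      then show ?thesis using im by simp
    qed
    show ?thesis
    proof (cases "\<exists>x y. leaf V E x \<and> leaf V E y \<and> E x y")
      case True
      then obtain x y where xy: "leaf V E x" "leaf V E y" "E x y" by blast
      have V: "V = {x, y}" using adjacent_leaves[OF less.prems(1) xy] .
      have xney: "x \<noteq> y" using graphD(3)[OF g xy(3)] .
      show ?thesis
      proof (cases "\<psi> x = x")
        case True then show ?thesis using V by blast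
      next
        case False
        have "\<psi> x \<in> V" using psiV V by simp
        then have px: "\<psi> x = y" using False V by simp
        have "\<psi> y \<in> V" using psiV V by simp
        moreover have "\<psi> y \<noteq> \<psi> x" using inj xney V unfolding inj_on_def by simp
        ultimately have "\<psi> y = x" using px V by simp
        then show ?thesis using px xy(3) by blast
      qed
    next
      case False
      define L where "L = {v. leaf V E v}"
      define V' where "V' = V - L"
      define F where "F = restrict_adj V' E"
      have T': "tree V' F" unfolding V'_def F_def L_def using strip_tree[OF less.prems(1) False c2] .
      obtain l where "leaf V E l" using leaf_exists[OF less.prems(1)] by blast
      then have "l \<in> V" "l \<notin> V'" unfolding V'_def L_def leaf_def by auto
      then have "V' \<subset> V" unfolding V'_def by blast
      then have lt: "card V' < card V" using psubset_card_mono[OF fin] by blast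
      have VL: "\<psi> u \<in> V' \<longleftrightarrow> u \<in> V'" if u: "u \<in> V" for u
      proof -
        have "leaf V E (\<psi> u) \<longleftrightarrow> leaf V E u" using leaf_auto[OF g less.prems(2) u] .
        then show ?thesis using psiV[OF u] u unfolding V'_def L_def by simp
      qed
      have "\<psi> ` V' = V'"
      proof
        show "\<psi> ` V' \<subseteq> V'"
        proof
          fix x assume "x \<in> \<psi> ` V'"
          then obtain u where "u \<in> V'" "x = \<psi> u" by (meson imageE)
          then show "x \<in> V'" using VL unfolding V'_def by blast
        qed
        show "V' \<subseteq> \<psi> ` V'"
        proof
          fix x assume x: "x \<in> V'"
          then have "x \<in> \<psi> ` V" using im unfolding V'_def by simp
          then obtain u where "u \<in> V" "x = \<psi> u" by (meson imageE)
          then show "x \<in> \<psi> ` V'" using VL x by blast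
        qed
      qed
      moreover have "inj_on \<psi> V'" using inj unfolding V'_def by (meson Diff_subset inj_on_subset)
      ultimately have "bij_betw \<psi> V' V'" unfolding bij_betw_def by blast
      moreover have "\<forall>u\<in>V'. \<forall>w\<in>V'. F u w \<longleftrightarrow> F (\<psi> u) (\<psi> w)"
        unfolding F_def restrict_adj_def using pres VL unfolding V'_def by auto
      ultimately have "automorphism V' F \<psi>" unfolding automorphism_def by blast
      then have "(\<exists>v\<in>V'. \<psi> v = v) \<or> (\<exists>c d. F c d \<and> \<psi> c = d \<and> \<psi> d = c)"
        using less.hyps[OF lt T'] by blast
      then show ?thesis unfolding F_def restrict_adj_def V'_def by blast
    qed
  qed
qed

lemma auto_inv:
  assumes a: "automorphism V E \<psi>"
  shows "automorphism V E (inv_into V \<psi>)"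
proof -
  have bij: "bij_betw \<psi> V V" and pres: "\<And>u w. u \<in> V \<Longrightarrow> w \<in> V \<Longrightarrow> E u w \<longleftrightarrow> E (\<psi> u) (\<psi> w)"
    using a unfolding automorphism_def by auto
  have bij': "bij_betw (inv_into V \<psi>) V V" using bij_betw_inv_into[OF bij] .
  have "E u w \<longleftrightarrow> E (inv_into V \<psi> u) (inv_into V \<psi> w)" if "u \<in> V" "w \<in> V" for u w
  proof -
    have im: "\<psi> ` V = V" using bij unfolding bij_betw_def by blast
    have "u \<in> \<psi> ` V" "w \<in> \<psi> ` V" using that im by auto
    then have "\<psi> (inv_into V \<psi> u) = u" "\<psi> (inv_into V \<psi> w) = w" by (auto intro: f_inv_into_f)
    moreover have "inv_into V \<psi> u \<in> V" "inv_into V \<psi> w \<in> V"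
      using \<open>u \<in> \<psi> ` V\<close> \<open>w \<in> \<psi> ` V\<close> by (auto intro: inv_into_into)
    ultimately show ?thesis using pres by metis
  qed
  then show ?thesis unfolding automorphism_def using bij' by blast
qed

lemma auto_comp:
  assumes "automorphism V E f" "automorphism V E g"
  shows "automorphism V E (f \<circ> g)"
proof -
  have bf: "bij_betw f V V" and pf: "\<And>u w. u \<in> V \<Longrightarrow> w \<in> V \<Longrightarrow> E u w \<longleftrightarrow> E (f u) (f w)"
    using assms(1) unfolding automorphism_def by auto
  have bg: "bij_betw g V V" and pg: "\<And>u w. u \<in> V \<Longrightarrow> w \<in> V \<Longrightarrow> E u w \<longleftrightarrow> E (g u) (g w)"
    using assms(2) unfolding automorphism_def by auto
  have gV: "\<And>u. u \<in> V \<Longrightarrow> g u \<in> V" using bg unfolding bij_betw_def by blast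
  have "bij_betw (f \<circ> g) V V" using bij_betw_trans[OF bg bf] .
  moreover have "E u w \<longleftrightarrow> E ((f \<circ> g) u) ((f \<circ> g) w)" if "u \<in> V" "w \<in> V" for u w
    using pg[OF that] pf[OF gV[OF that(1)] gV[OF that(2)]] by simp
  ultimately show ?thesis unfolding automorphism_def by blast
qed

lemma auto_id: "automorphism V E id"
  unfolding automorphism_def by simp

lemma rtranclp_in_V:
  assumes g: "graph V E" and "E\<^sup>*\<^sup>* u v" "u \<in> V"
  shows "v \<in> V"
  using assms(2,3)
proof (induction rule: rtranclp_induct)
  case base then show ?case .
next
  case (step y z) then show ?case using graphD(2)[OF g step(2)] by blast
qed

lemma comp_closed:
  assumes "x \<in> component W G c" "G x y" "y \<in> W"
  shows "y \<in> component W G c"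
  using assms unfolding component_def by (auto intro: rtranclp.rtrancl_into_rtrancl)

lemma swap_construct:
  assumes g: "graph V E" and a: "automorphism V E \<psi>"
    and CV: "C \<subseteq> V" and DV: "D \<subseteq> V" and CD: "C \<inter> D = {}" and img: "\<psi> ` C = D"
    and out: "\<And>u w. u \<in> C \<union> D \<Longrightarrow> w \<in> V \<Longrightarrow> w \<notin> C \<union> D \<Longrightarrow> E u w \<Longrightarrow> \<psi> w = w"
    and cross: "\<And>u v. u \<in> C \<Longrightarrow> v \<in> D \<Longrightarrow> E u v \<longleftrightarrow> E (\<psi> u) (inv_into V \<psi> v)"
  shows "automorphism V E (\<lambda>v. if v \<in> C then \<psi> v else if v \<in> D then inv_into V \<psi> v else v)"
proof -
  define \<iota> where "\<iota> = inv_into V \<psi>"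
  define \<sigma> where "\<sigma> = (\<lambda>v. if v \<in> C then \<psi> v else if v \<in> D then \<iota> v else v)"
  have fin: "finite V" using g unfolding graph_def by blast
  have bij: "bij_betw \<psi> V V" and pres: "\<And>u w. u \<in> V \<Longrightarrow> w \<in> V \<Longrightarrow> E u w \<longleftrightarrow> E (\<psi> u) (\<psi> w)"
    using a unfolding automorphism_def by auto
  have inj: "inj_on \<psi> V" using bij unfolding bij_betw_def by blast
  have sym: "\<And>x y. E x y \<longleftrightarrow> E y x" using graphD(4)[OF g] by blast
  have psiC: "\<psi> c \<in> D" if "c \<in> C" for c using img that by blast
  have iotapsi: "\<iota> (\<psi> c) = c" if "c \<in> C" for c
    unfolding \<iota>_def using inv_into_f_f[OF inj] that CV by blast
  have iotaD: "\<iota> d \<in> C" and psiiota: "\<psi> (\<iota> d) = d" if dD: "d \<in> D" for d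
  proof -
    have "d \<in> \<psi> ` C" using img dD by simp
    then obtain c where c: "c \<in> C" "d = \<psi> c" by (meson imageE)
    show "\<iota> d \<in> C" using c iotapsi by simp
    show "\<psi> (\<iota> d) = d" using c iotapsi by simp
  qed
  have sV: "\<sigma> v \<in> V" if "v \<in> V" for v
  proof -
    consider "v \<in> C" | "v \<notin> C" "v \<in> D" | "v \<notin> C" "v \<notin> D" by blast
    then show ?thesis
    proof cases
      case 1 then show ?thesis unfolding \<sigma>_def using psiC DV by auto
    next
      case 2 then show ?thesis unfolding \<sigma>_def using iotaD CV by auto
    next
      case 3 then show ?thesis unfolding \<sigma>_def using that by auto
    qed
  qed
  have surj: "v \<in> \<sigma> ` V" if "v \<in> V" for v
  proof -
    consider "v \<in> D" | "v \<in> C" | "v \<notin> C" "v \<notin> D" by blast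
    then show ?thesis
    proof cases
      case 1
      then have "\<iota> v \<in> C" "\<psi> (\<iota> v) = v" using iotaD psiiota by auto
      then have "\<sigma> (\<iota> v) = v" unfolding \<sigma>_def by simp
      then show ?thesis using \<open>\<iota> v \<in> C\<close> CV by (metis image_eqI subsetD)
    next
      case 2
      then have "\<psi> v \<in> D" "\<psi> v \<notin> C" using psiC CD by auto
      then have "\<sigma> (\<psi> v) = v" unfolding \<sigma>_def using iotapsi 2 by simp
      then show ?thesis using \<open>\<psi> v \<in> D\<close> DV by (metis image_eqI subsetD)
    next
      case 3
      then have "\<sigma> v = v" unfolding \<sigma>_def by simp
      then show ?thesis using that by (metis image_eqI)
    qed
  qed
  have im: "\<sigma> ` V = V" using sV surj by blast
  then have "inj_on \<sigma> V" using fin by (simp add: eq_card_imp_inj_on)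
  then have bs: "bij_betw \<sigma> V V" using im unfolding bij_betw_def by blast
  have OC: "E u w \<longleftrightarrow> E (\<psi> u) w" if "u \<in> C" "w \<in> V" "w \<notin> C \<union> D" for u w
  proof
    assume "E u w"
    then have "\<psi> w = w" using out that by blast
    then show "E (\<psi> u) w" using pres[of u w] that CV \<open>E u w\<close> by auto
  next
    assume "E (\<psi> u) w"
    then have "\<psi> w = w" using out[of "\<psi> u" w] that psiC by blast
    then show "E u w" using pres[of u w] that CV \<open>E (\<psi> u) w\<close> by auto
  qed
  have OD: "E u w \<longleftrightarrow> E (\<iota> u) w" if "u \<in> D" "w \<in> V" "w \<notin> C \<union> D" for u w
    using OC[of "\<iota> u" w] iotaD psiiota that by auto
  have key: "E u v \<longleftrightarrow> E (\<sigma> u) (\<sigma> v)" if uv: "u \<in> V" "v \<in> V" for u v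
  proof -
    consider "u \<in> C" | "u \<notin> C" "u \<in> D" | "u \<notin> C \<union> D" by blast
    then show ?thesis
    proof cases
      case u1: 1
      consider "v \<in> C" | "v \<notin> C" "v \<in> D" | "v \<notin> C \<union> D" by blast
      then show ?thesis
      proof cases
        case 1 then show ?thesis unfolding \<sigma>_def using u1 pres uv by simp
      next
        case 2 then show ?thesis unfolding \<sigma>_def \<iota>_def using u1 cross by simp
      next
        case 3 then show ?thesis unfolding \<sigma>_def using u1 OC uv by simp
      qed
    next
      case u2: 2
      consider "v \<in> C" | "v \<notin> C" "v \<in> D" | "v \<notin> C \<union> D" by blast
      then show ?thesis
      proof cases
        case 1
        have "E v u \<longleftrightarrow> E (\<psi> v) (\<iota> u)" using cross[of v u] 1 u2 unfolding \<iota>_def by simp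
        then show ?thesis unfolding \<sigma>_def using u2 1 sym by metis
      next
        case 2
        have "E (\<iota> u) (\<iota> v) \<longleftrightarrow> E (\<psi> (\<iota> u)) (\<psi> (\<iota> v))"
          using pres iotaD u2 2 CV by blast
        then show ?thesis unfolding \<sigma>_def using u2 2 psiiota by simp
      next
        case 3 then show ?thesis unfolding \<sigma>_def using u2 OD uv by simp
      qed
    next
      case u3: 3
      consider "v \<in> C" | "v \<notin> C" "v \<in> D" | "v \<notin> C \<union> D" by blast
      then show ?thesis
      proof cases
        case 1 then show ?thesis unfolding \<sigma>_def using u3 OC[of v u] uv sym by auto
      next
        case 2 then show ?thesis unfolding \<sigma>_def using u3 OD[of v u] uv sym by auto
      next
        case 3 then show ?thesis unfolding \<sigma>_def using u3 by auto
      qed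
    qed
  qed
  show ?thesis using bs key unfolding automorphism_def \<sigma>_def \<iota>_def by blast
qed

lemma flip_swap:
  assumes T: "tree V E" and a: "automorphism V E \<psi>" and cd: "E c d" "\<psi> c = d" "\<psi> d = c"
    and aC: "a \<in> component V (delete_edge E c d) c"
  shows "\<exists>\<sigma>. automorphism V E \<sigma> \<and> \<sigma> a = \<psi> a \<and> \<sigma> (\<psi> a) = a"
proof -
  define F where "F = delete_edge E c d"
  define C where "C = component V F c"
  define D where "D = component V F d"
  have g: "graph V E" using T unfolding tree_def by blast
  have bij: "bij_betw \<psi> V V" and pres: "\<And>u w. u \<in> V \<Longrightarrow> w \<in> V \<Longrightarrow> E u w \<longleftrightarrow> E (\<psi> u) (\<psi> w)"
    using a unfolding automorphism_def by auto
  have inj: "inj_on \<psi> V" using bij unfolding bij_betw_def by blast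
  have cV: "c \<in> V" "d \<in> V" using graphD[OF g cd(1)] by auto
  have psic: "\<psi> u = c \<longleftrightarrow> u = d" "\<psi> u = d \<longleftrightarrow> u = c" if "u \<in> V" for u
    using inj cd cV that unfolding inj_on_def by metis+
  have presF: "F u v \<longleftrightarrow> F (\<psi> u) (\<psi> v)" if "u \<in> V" "v \<in> V" for u v
    unfolding F_def delete_edge_def using pres[OF that] psic[OF that(1)] psic[OF that(2)] by blast
  have FV: "u \<in> V \<and> v \<in> V" if "F u v" for u v
    using that graphD(1,2)[OF g] unfolding F_def delete_edge_def by blast
  have sW: "\<psi> u \<in> V \<longleftrightarrow> u \<in> V" if "u \<in> V" for u using bij that bij_betwE by blast
  have img: "\<psi> ` C = D" unfolding C_def D_def
    using component_image[of \<psi> V F V c, OF bij presF FV subset_refl sW cV(1)] cd(2) by simp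
  have CV: "C \<subseteq> V" "D \<subseteq> V" unfolding C_def D_def component_def by auto
  have CD: "C \<inter> D = {}"
    using edge_components_disjoint[OF T cd(1)] unfolding C_def D_def F_def component_def by blast
  have cover: "x \<in> C \<union> D" if "x \<in> V" for x
    using edge_components_cover[OF T cd(1) that] that unfolding C_def D_def F_def component_def by blast
  have symE: "\<And>x y. E x y \<longleftrightarrow> E y x" using graphD(4)[OF g] by blast
  have crossE: "E u v \<longleftrightarrow> u = c \<and> v = d" if uv: "u \<in> C" "v \<in> D" for u v
  proof
    assume "E u v"
    show "u = c \<and> v = d"
    proof (rule ccontr)
      assume nn: "\<not> (u = c \<and> v = d)"
      have "u \<noteq> d" using uv CD unfolding D_def component_def using cV by auto
      then have "F u v" unfolding F_def delete_edge_def using \<open>E u v\<close> nn by blast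
      then have "v \<in> V" using FV by blast
      then have "v \<in> C" using comp_closed[of u V F c v] uv(1) \<open>F u v\<close> unfolding C_def by blast
      then show False using uv CD by blast
    qed
  next
    assume "u = c \<and> v = d" then show "E u v" using cd by simp
  qed
  define \<iota> where "\<iota> = inv_into V \<psi>"
  have iota: "\<iota> v \<in> C" "\<psi> (\<iota> v) = v" if "v \<in> D" for v
  proof -
    have "v \<in> \<psi> ` C" using img that by simp
    then obtain u where u: "u \<in> C" "v = \<psi> u" by (meson imageE)
    have "\<iota> v = u" unfolding \<iota>_def u(2) using inv_into_f_f[OF inj] u(1) CV by blast
    then show "\<iota> v \<in> C" "\<psi> (\<iota> v) = v" using u by auto
  qed
  have iotad: "\<iota> d = c" unfolding \<iota>_def using inv_into_f_f[OF inj cV(1)] cd(2) by simp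
  have cross: "E u v \<longleftrightarrow> E (\<psi> u) (inv_into V \<psi> v)" if uv: "u \<in> C" "v \<in> D" for u v
  proof -
    have pu: "\<psi> u \<in> D" using img uv(1) by blast
    have "E (\<psi> u) (\<iota> v) \<longleftrightarrow> E (\<iota> v) (\<psi> u)" using symE by blast
    also have "\<dots> \<longleftrightarrow> \<iota> v = c \<and> \<psi> u = d" using crossE[OF iota(1)[OF uv(2)] pu] .
    also have "\<dots> \<longleftrightarrow> v = d \<and> u = c"
      using iota(2)[OF uv(2)] cd(2) psic(2)[of u] uv(1) CV iotad by auto
    finally show ?thesis using crossE[OF uv] unfolding \<iota>_def by blast
  qed
  have out: "\<psi> w = w" if "u \<in> C \<union> D" "w \<in> V" "w \<notin> C \<union> D" "E u w" for u w
    using cover that by blast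
  have aut: "automorphism V E (\<lambda>v. if v \<in> C then \<psi> v else if v \<in> D then inv_into V \<psi> v else v)"
    by (rule swap_construct[OF g a CV(1) CV(2) CD img out cross])
  have aC': "a \<in> C" using aC unfolding C_def F_def .
  have pa: "\<psi> a \<in> D" "\<psi> a \<notin> C" using img aC' CD by auto
  have "inv_into V \<psi> (\<psi> a) = a" using inv_into_f_f[OF inj] aC' CV by blast
  then show ?thesis using aut aC' pa by (intro exI[of _ "\<lambda>v. if v \<in> C then \<psi> v else if v \<in> D then inv_into V \<psi> v else v"]) auto
qed

lemma fixed_swap:
  assumes T: "tree V E" and au: "automorphism V E \<psi>" and r: "r \<in> V" "\<psi> r = r"
    and xV: "x \<in> V" and ne: "\<psi> x \<noteq> x"
  shows "\<exists>\<sigma>. automorphism V E \<sigma> \<and> \<sigma> x = \<psi> x \<and> \<sigma> (\<psi> x) = x"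
proof -
  have g: "graph V E" using T unfolding tree_def by blast
  have bij: "bij_betw \<psi> V V" and pres: "\<And>u w. u \<in> V \<Longrightarrow> w \<in> V \<Longrightarrow> E u w \<longleftrightarrow> E (\<psi> u) (\<psi> w)"
    using au unfolding automorphism_def by auto
  have inj: "inj_on \<psi> V" using bij unfolding bij_betw_def by blast
  have psiV: "\<psi> u \<in> V" if "u \<in> V" for u using bij that bij_betwE by blast
  have "E\<^sup>*\<^sup>* r x" using T r(1) xV unfolding tree_def connected_graph_def by blast
  then obtain \<pi> where \<pi>: "\<pi> \<noteq> []" "hd \<pi> = r" "last \<pi> = x" "distinct \<pi>" "successively E \<pi>"
    using walk_path by metis
  have \<pi>V: "y \<in> V" if "y \<in> set \<pi>" for y
  proof -
    have "E\<^sup>*\<^sup>* r y" using succ_walk_hd[OF \<pi>(5) that] \<pi>(2) by simp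
    then show ?thesis using rtranclp_in_V[OF g _ r(1)] by blast
  qed
  define n where "n = length \<pi>"
  have rx: "r \<noteq> x" using r(2) ne by blast
  have n2: "n \<ge> 2"
  proof (rule ccontr)
    assume "\<not> n \<ge> 2"
    moreover have "n \<ge> 1" using \<pi>(1) unfolding n_def by (cases \<pi>) auto
    ultimately have "n = 1" by arith
    then have "\<pi> = [hd \<pi>]" unfolding n_def by (cases \<pi>) (auto simp: Suc_le_eq)
    then have "last \<pi> = hd \<pi>" by (metis last_ConsL)
    then show False using \<pi> rx by simp
  qed
  have p0: "\<pi> ! 0 = r" using \<pi>(1,2) by (simp add: hd_conv_nth)
  have pl: "\<pi> ! (n - 1) = x" using \<pi>(1,3) unfolding n_def by (simp add: last_conv_nth)
  define J where "J = {i. i < n \<and> \<psi> (\<pi> ! i) = \<pi> ! i}"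
  have J0: "0 \<in> J" unfolding J_def using p0 r(2) n2 by simp
  have finJ: "finite J" unfolding J_def by simp
  define j where "j = Max J"
  have jJ: "j \<in> J" unfolding j_def using Max_in[OF finJ] J0 by blast
  have jmax: "i \<le> j" if "i \<in> J" for i unfolding j_def using Max_ge[OF finJ that] .
  have "n - 1 \<notin> J" unfolding J_def using pl ne by simp
  then have jn: "Suc j < n" using jJ n2 unfolding J_def by (metis (mono_tags, lifting) Suc_lessI diff_Suc_1 mem_Collect_eq)
  define m where "m = \<pi> ! j"
  define a' where "a' = \<pi> ! Suc j"
  define b' where "b' = \<psi> a'"
  have mfix: "\<psi> m = m" using jJ unfolding J_def m_def by simp
  have "Suc j \<notin> J" using jmax by fastforce
  then have ab: "a' \<noteq> b'" unfolding J_def a'_def b'_def using jn by auto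
  have Ema: "E m a'" unfolding m_def a'_def using successively_nth[OF \<pi>(5) jn[unfolded n_def]] .
  have mV: "m \<in> V" "a' \<in> V" using graphD[OF g Ema] by auto
  have Emb: "E m b'" unfolding b'_def using pres[OF mV] Ema mfix by simp
  have bV: "b' \<in> V" using graphD[OF g Emb] by auto
  have am: "a' \<noteq> m" "b' \<noteq> m" using graphD(3)[OF g Ema] graphD(3)[OF g Emb] by auto
  define W where "W = V - {m}"
  define G where "G = restrict_adj W E"
  define Cc where "Cc = component W G a'"
  define Dd where "Dd = component W G b'"
  have aW: "a' \<in> W" "b' \<in> W" unfolding W_def using mV bV am by auto
  have nthV: "\<pi> ! k \<in> V" if "k < n" for k using \<pi>V that unfolding n_def by simp
  have nthm: "\<pi> ! k \<noteq> m" if "k < n" "k \<noteq> j" for k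
    unfolding m_def using nth_eq_iff_index_eq[OF \<pi>(4)] that jn unfolding n_def by auto
  have "G\<^sup>*\<^sup>* (\<pi> ! Suc j) (\<pi> ! (n - 1))"
  proof (rule nth_walk)
    fix k assume k: "Suc j \<le> k" "k < n - 1"
    have "E (\<pi> ! k) (\<pi> ! Suc k)" using successively_nth[OF \<pi>(5)] k unfolding n_def by simp
    moreover have "\<pi> ! k \<in> W" "\<pi> ! Suc k \<in> W" unfolding W_def using nthV nthm k by auto
    ultimately show "G (\<pi> ! k) (\<pi> ! Suc k)" unfolding G_def restrict_adj_def by blast
  qed (use jn in auto)
  moreover have "x \<in> W" unfolding W_def using xV nthm[of "n - 1"] pl jn n2 by auto
  ultimately have xC: "x \<in> Cc" unfolding Cc_def component_def a'_def using pl by simp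
  have sWG: "\<psi> u \<in> W \<longleftrightarrow> u \<in> W" if "u \<in> V" for u
  proof -
    have "\<psi> u = m \<longleftrightarrow> u = m" using inj mfix mV(1) that unfolding inj_on_def by metis
    then show ?thesis unfolding W_def using psiV[OF that] that by auto
  qed
  have presG: "G u v \<longleftrightarrow> G (\<psi> u) (\<psi> v)" if "u \<in> V" "v \<in> V" for u v
    unfolding G_def restrict_adj_def using pres[OF that] sWG that by blast
  have FVG: "u \<in> W \<and> v \<in> W" if "G u v" for u v using that unfolding G_def restrict_adj_def by blast
  have WV: "W \<subseteq> V" unfolding W_def by blast
  have img: "\<psi> ` Cc = Dd" unfolding Cc_def Dd_def b'_def
    using component_image[of \<psi> V G W a', OF bij presG FVG WV sWG aW(1)] .
  have CV: "Cc \<subseteq> V" "Dd \<subseteq> V" unfolding Cc_def Dd_def component_def using WV by auto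
  have symG: "\<And>u v. G u v \<Longrightarrow> G v u" unfolding G_def using restrict_adj_sym[OF g] by blast
  have CD: "Cc \<inter> Dd = {}"
  proof (rule ccontr)
    assume "Cc \<inter> Dd \<noteq> {}"
    then obtain z where "G\<^sup>*\<^sup>* a' z" "G\<^sup>*\<^sup>* b' z" unfolding Cc_def Dd_def component_def by blast
    then have "G\<^sup>*\<^sup>* a' b'" using rtranclp_sym[of G, OF symG] by (meson rtranclp_trans)
    moreover have "delete_edge E m a' u v" if "G u v" for u v
      using that unfolding G_def restrict_adj_def delete_edge_def W_def by blast
    ultimately have H1: "(delete_edge E m a')\<^sup>*\<^sup>* a' b'" by (metis mono_rtranclp)
    have "delete_edge E m a' b' m" unfolding delete_edge_def using graphD(4)[OF g Emb] ab am by blast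
    then have "(delete_edge E m a')\<^sup>*\<^sup>* a' m" using H1 by (meson rtranclp.rtrancl_into_rtrancl)
    then have "(delete_edge E m a')\<^sup>*\<^sup>* m a'" using rtranclp_sym[of "delete_edge E m a'"] delete_edge_sym[OF g] by blast
    then show False using bridge[OF T Ema] by blast
  qed
  have CW: "Cc \<subseteq> W" "Dd \<subseteq> W" unfolding Cc_def Dd_def component_def by auto
  have noedge: "\<not> E u v" if "u \<in> Cc" "v \<in> Dd" for u v
  proof
    assume "E u v"
    then have "G u v" unfolding G_def restrict_adj_def using that CW by blast
    then have "v \<in> Cc" using comp_closed[of u W G a' v] that CW unfolding Cc_def by blast
    then show False using that CD by blast
  qed
  have out: "\<psi> w = w" if "u \<in> Cc \<union> Dd" "w \<in> V" "w \<notin> Cc \<union> Dd" "E u w" for u w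
  proof (cases "w = m")
    case True then show ?thesis using mfix by simp
  next
    case False
    then have "w \<in> W" unfolding W_def using that by blast
    then have "G u w" unfolding G_def restrict_adj_def using that CW by blast
    then have "w \<in> Cc \<union> Dd" using comp_closed[of u W G a' w] comp_closed[of u W G b' w] that \<open>w \<in> W\<close>
      unfolding Cc_def Dd_def by blast
    then show ?thesis using that by blast
  qed
  have cross: "E u v \<longleftrightarrow> E (\<psi> u) (inv_into V \<psi> v)" if "u \<in> Cc" "v \<in> Dd" for u v
  proof -
    have "v \<in> \<psi> ` Cc" using img that by simp
    then obtain u' where u': "u' \<in> Cc" "v = \<psi> u'" by (meson imageE)
    have "inv_into V \<psi> v = u'" using inv_into_f_f[OF inj] u' CV by blast
    moreover have "\<psi> u \<in> Dd" using img that by blast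
    ultimately have "\<not> E (\<psi> u) (inv_into V \<psi> v)" using noedge[OF u'(1)] graphD(4)[OF g] by metis
    then show ?thesis using noedge that by blast
  qed
  have aut: "automorphism V E (\<lambda>v. if v \<in> Cc then \<psi> v else if v \<in> Dd then inv_into V \<psi> v else v)"
    by (rule swap_construct[OF g au CV(1) CV(2) CD img out cross])
  have pa: "\<psi> x \<in> Dd" "\<psi> x \<notin> Cc" using img xC CD by auto
  have "inv_into V \<psi> (\<psi> x) = x" using inv_into_f_f[OF inj] xV by blast
  then show ?thesis using aut xC pa
    by (intro exI[of _ "\<lambda>v. if v \<in> Cc then \<psi> v else if v \<in> Dd then inv_into V \<psi> v else v"]) auto
qed

lemma tree_swap:
  assumes T: "tree V E" and au: "automorphism V E \<psi>" and xV: "x \<in> V"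
  shows "\<exists>\<sigma>. automorphism V E \<sigma> \<and> \<sigma> x = \<psi> x \<and> \<sigma> (\<psi> x) = x"
proof (cases "\<psi> x = x")
  case True then show ?thesis using auto_id by (intro exI[of _ id]) auto
next
  case ne: False
  have g: "graph V E" using T unfolding tree_def by blast
  from fixed_or_flip[OF T au] show ?thesis
  proof
    assume "\<exists>v\<in>V. \<psi> v = v"
    then obtain r where "r \<in> V" "\<psi> r = r" by blast
    then show ?thesis using fixed_swap[OF T au _ _ xV ne] by blast
  next
    assume "\<exists>c d. E c d \<and> \<psi> c = d \<and> \<psi> d = c"
    then obtain c d where cd: "E c d" "\<psi> c = d" "\<psi> d = c" by blast
    have dc: "E d c" using graphD(4)[OF g cd(1)] .
    have eq: "delete_edge E d c = delete_edge E c d" by (auto simp: delete_edge_def fun_eq_iff)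
    from edge_components_cover[OF T cd(1) xV] show ?thesis
    proof
      assume "(delete_edge E c d)\<^sup>*\<^sup>* c x"
      then have "x \<in> component V (delete_edge E c d) c" unfolding component_def using xV by blast
      then show ?thesis using flip_swap[OF T au cd] by blast
    next
      assume "(delete_edge E c d)\<^sup>*\<^sup>* d x"
      then have "x \<in> component V (delete_edge E d c) d" unfolding component_def eq using xV by blast
      then show ?thesis using flip_swap[OF T au dc cd(3) cd(2)] by blast
    qed
  qed
qed

lemma path_succ: "is_path V E P \<Longrightarrow> P \<noteq> [] \<and> distinct P \<and> set P \<subseteq> V \<and> successively E P"
  unfolding is_path_def by (simp add: successively_conv_nth)

lemma cover_hd_inj:
  assumes pc: "path_cover V E \<P>"
  shows "inj_on hd \<P>"
proof
  fix Q Q' assume Q: "Q \<in> \<P>" "Q' \<in> \<P>" "hd Q = hd Q'"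
  have "Q \<noteq> []" "Q' \<noteq> []" using pc Q unfolding path_cover_def is_path_def by auto
  then have "hd Q \<in> set Q \<inter> set Q'" using Q(3) by (metis IntI hd_in_set)
  then show "Q = Q'" using pc Q unfolding path_cover_def by blast
qed

lemma cover_finite:
  assumes g: "graph V E" and pc: "path_cover V E \<P>"
  shows "finite \<P>"
proof -
  have "hd ` \<P> \<subseteq> V"
  proof
    fix s assume "s \<in> hd ` \<P>"
    then obtain Q where "Q \<in> \<P>" "s = hd Q" by blast
    then show "s \<in> V" using pc path_succ[of V E Q] unfolding path_cover_def by (metis hd_in_set subsetD)
  qed
  then have "finite (hd ` \<P>)" using g unfolding graph_def by (meson finite_subset)
  then show ?thesis using finite_imageD cover_hd_inj[OF pc] by blast
qed

lemma reverse_cover: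
  assumes g: "graph V E" and pc: "path_cover V E \<P>" and P: "P \<in> \<P>"
  shows "path_cover V E (insert (rev P) (\<P> - {P}))"
proof -
  have sym: "\<And>x y. E x y \<longleftrightarrow> E y x" using graphD(4)[OF g] by blast
  have pP: "P \<noteq> [] \<and> distinct P \<and> set P \<subseteq> V \<and> successively E P"
    using pc P path_succ unfolding path_cover_def by blast
  have "successively E (rev P)" using pP sym by (simp add: successively_rev)
  then have rp: "is_path V E (rev P)" using pP unfolding is_path_def by (simp add: successively_conv_nth)
  have disj: "\<And>Q Q'. Q \<in> \<P> \<Longrightarrow> Q' \<in> \<P> \<Longrightarrow> Q \<noteq> Q' \<Longrightarrow> set Q \<inter> set Q' = {}"
    using pc unfolding path_cover_def by blast
  show ?thesis unfolding path_cover_def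
  proof (intro conjI)
    show "\<forall>Q\<in>insert (rev P) (\<P> - {P}). is_path V E Q" using rp pc unfolding path_cover_def by blast
    show "\<forall>Q\<in>insert (rev P) (\<P> - {P}). \<forall>Q'\<in>insert (rev P) (\<P> - {P}). Q \<noteq> Q' \<longrightarrow> set Q \<inter> set Q' = {}"
      using disj P by auto
    have "(\<Union>Q\<in>insert (rev P) (\<P> - {P}). set Q) = set P \<union> (\<Union>Q\<in>\<P> - {P}. set Q)" by simp
    also have "\<dots> = (\<Union>Q\<in>\<P>. set Q)" using P by blast
    also have "\<dots> = V" using pc unfolding path_cover_def by blast
    finally show "(\<Union>Q\<in>insert (rev P) (\<P> - {P}). set Q) = V" .
  qed
qed

lemma min_zf_of_cover:
  assumes T: "tree V E" and mpc: "min_path_cover V E \<P>" and pc: "path_cover V E \<Q>"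
    and le: "card \<Q> \<le> card \<P>"
  shows "min_zero_forcing_set V E (hd ` \<Q>)"
proof -
  have g: "graph V E" using T unfolding tree_def by blast
  have zf: "zero_forcing_set V E (hd ` \<Q>)" using zf_upper[OF T pc] .
  have "card (hd ` \<Q>) \<le> card S'" if zS: "zero_forcing_set V E S'" for S'
  proof -
    obtain \<R> where R: "path_cover V E \<R>" "card \<R> \<le> card S'" using zf_lower[OF g zS] by blast
    have "card \<P> \<le> card \<R>" using mpc R(1) unfolding min_path_cover_def by blast
    moreover have "card (hd ` \<Q>) \<le> card \<Q>" using cover_finite[OF g pc] by (rule card_image_le)
    ultimately show ?thesis using R(2) le by linarith
  qed
  then show ?thesis unfolding min_zero_forcing_set_def using zf by blast
qed

lemma orbit_arg:
  assumes g: "graph V E" and phi: "automorphism V E \<phi>" and img: "\<phi> ` insert a R = insert b R"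
    and aR: "a \<notin> R" and bR: "b \<notin> R" and RV: "R \<subseteq> V" and aV: "a \<in> V"
  shows "\<exists>\<psi>. automorphism V E \<psi> \<and> \<psi> a = b"
proof (rule ccontr)
  assume nb: "\<not> ?thesis"
  define Orb where "Orb = {v. \<exists>h. automorphism V E h \<and> h a = v}"
  have fin: "finite V" using g unfolding graph_def by blast
  have finR: "finite R" using RV fin finite_subset by blast
  have aO: "a \<in> Orb" unfolding Orb_def by (intro CollectI exI[of _ id]) (simp add: auto_id)
  have bO: "b \<notin> Orb" unfolding Orb_def using nb by blast
  have phiO: "\<phi> v \<in> Orb" if vO: "v \<in> Orb" for v
  proof -
    obtain h where h: "automorphism V E h" "h a = v" using vO unfolding Orb_def by blast
    have "automorphism V E (\<phi> \<circ> h)" using auto_comp[OF phi h(1)] .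
    then show ?thesis unfolding Orb_def using h(2) by (intro CollectI exI[of _ "\<phi> \<circ> h"]) auto
  qed
  have inj: "inj_on \<phi> V" using phi unfolding automorphism_def bij_betw_def by blast
  have sub: "\<phi> ` (insert a R \<inter> Orb) \<subseteq> insert b R \<inter> Orb" using img phiO by blast
  have "insert b R \<inter> Orb = R \<inter> Orb" using bO by blast
  have c1: "card (insert a R \<inter> Orb) = Suc (card (R \<inter> Orb))"
  proof -
    have "insert a R \<inter> Orb = insert a (R \<inter> Orb)" using aO by blast
    then show ?thesis using aR finR by simp
  qed
  have "inj_on \<phi> (insert a R \<inter> Orb)" using inj RV aV by (meson inf.coboundedI1 inj_on_subset insert_subset)
  then have "card (\<phi> ` (insert a R \<inter> Orb)) = card (insert a R \<inter> Orb)" by (rule card_image)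
  moreover have "card (\<phi> ` (insert a R \<inter> Orb)) \<le> card (R \<inter> Orb)"
    using sub \<open>insert b R \<inter> Orb = R \<inter> Orb\<close> finR by (simp add: card_mono)
  ultimately show False using c1 by simp
qed

lemma endpoint_swap:
  assumes T: "tree V E" and iu: "iso_unique_zf V E" and mpc: "min_path_cover V E \<P>" and P: "P \<in> \<P>"
  shows "\<exists>\<sigma>. automorphism V E \<sigma> \<and> \<sigma> (hd P) = last P \<and> \<sigma> (last P) = hd P"
proof -
  have g: "graph V E" using T unfolding tree_def by blast
  have pc: "path_cover V E \<P>" using mpc unfolding min_path_cover_def by blast
  have pP: "P \<noteq> []" "distinct P" "set P \<subseteq> V" "successively E P"
    using pc P path_succ unfolding path_cover_def by blast+
  have disj: "\<And>Q Q'. Q \<in> \<P> \<Longrightarrow> Q' \<in> \<P> \<Longrightarrow> Q \<noteq> Q' \<Longrightarrow> set Q \<inter> set Q' = {}"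
    using pc unfolding path_cover_def by blast
  have finP: "finite \<P>" using cover_finite[OF g pc] .
  define \<P>' where "\<P>' = insert (rev P) (\<P> - {P})"
  have pc': "path_cover V E \<P>'" unfolding \<P>'_def using reverse_cover[OF g pc P] .
  have le: "card \<P>' \<le> card \<P>"
  proof -
    have "card \<P>' \<le> Suc (card (\<P> - {P}))" unfolding \<P>'_def using finP by (simp add: card_insert_le_m1)
    also have "\<dots> = card \<P>" using card_Suc_Diff1[OF finP P] .
    finally show ?thesis .
  qed
  have m1: "min_zero_forcing_set V E (hd ` \<P>)" using min_zf_of_cover[OF T mpc pc] by simp
  have m2: "min_zero_forcing_set V E (hd ` \<P>')" using min_zf_of_cover[OF T mpc pc' le] .
  have iu': "\<forall>A B. min_zero_forcing_set V E A \<longrightarrow> min_zero_forcing_set V E B \<longrightarrow>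
     (\<exists>\<phi>. automorphism V E \<phi> \<and> \<phi> ` A = B)" using iu unfolding iso_unique_zf_def .
  have "\<exists>\<phi>. automorphism V E \<phi> \<and> \<phi> ` (hd ` \<P>) = hd ` \<P>'" using iu'[rule_format, OF m1 m2] .
  then obtain \<phi> where phi: "automorphism V E \<phi>" "\<phi> ` (hd ` \<P>) = hd ` \<P>'" by blast
  define R where "R = hd ` (\<P> - {P})"
  have S1: "hd ` \<P> = insert (hd P) R" unfolding R_def using P by blast
  have S2: "hd ` \<P>' = insert (last P) R" unfolding R_def \<P>'_def using pP(1) by (simp add: hd_rev)
  have notR: "v \<notin> R" if "v \<in> set P" for v
  proof
    assume "v \<in> R"
    then obtain Q where Q: "Q \<in> \<P>" "Q \<noteq> P" "v = hd Q" unfolding R_def by blast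
    have "Q \<noteq> []" using pc Q(1) path_succ unfolding path_cover_def by blast
    then have "v \<in> set Q" using Q(3) by simp
    then show False using disj[OF Q(1) P Q(2)] that by blast
  qed
  have RV: "R \<subseteq> V"
  proof
    fix s assume "s \<in> R"
    then obtain Q where "Q \<in> \<P>" "s = hd Q" unfolding R_def by blast
    then show "s \<in> V" using pc path_succ[of V E Q] unfolding path_cover_def by (metis hd_in_set subsetD)
  qed
  have hV: "hd P \<in> V" using pP by (metis hd_in_set subsetD)
  obtain \<psi> where psi: "automorphism V E \<psi>" "\<psi> (hd P) = last P"
    using orbit_arg[OF g phi(1) _ notR notR RV hV] phi(2) S1 S2 pP(1) by (metis hd_in_set last_in_set)
  obtain \<sigma> where "automorphism V E \<sigma>" "\<sigma> (hd P) = \<psi> (hd P)" "\<sigma> (\<psi> (hd P)) = hd P"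
    using tree_swap[OF T psi(1) hV] by blast
  then show ?thesis using psi(2) by metis
qed

lemma reverse_path:
  assumes T: "tree V E" and au: "automorphism V E \<sigma>" and pP: "P \<noteq> []" "distinct P" "set P \<subseteq> V" "successively E P"
    and s1: "\<sigma> (hd P) = last P" and s2: "\<sigma> (last P) = hd P"
  shows "map \<sigma> P = rev P"
proof -
  have g: "graph V E" using T unfolding tree_def by blast
  have bij: "bij_betw \<sigma> V V" and pres: "\<And>u w. u \<in> V \<Longrightarrow> w \<in> V \<Longrightarrow> E u w \<longleftrightarrow> E (\<sigma> u) (\<sigma> w)"
    using au unfolding automorphism_def by auto
  have inj: "inj_on \<sigma> V" using bij unfolding bij_betw_def by blast
  have sym: "\<And>x y. E x y \<longleftrightarrow> E y x" using graphD(4)[OF g] by blast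
  have "successively (\<lambda>x y. E (\<sigma> x) (\<sigma> y)) P"
  proof (rule successively_mono[OF pP(4)])
    fix x y assume "x \<in> set P" "y \<in> set P" "E x y"
    then show "E (\<sigma> x) (\<sigma> y)" using pres pP(3) by blast
  qed
  then have a1: "successively E (map \<sigma> P)" by (simp add: successively_map)
  have a2: "distinct (map \<sigma> P)" using pP(2,3) inj by (simp add: distinct_map inj_on_subset)
  have a3: "successively E (rev P)" using pP(4) sym by (simp add: successively_rev)
  show ?thesis
    using unique_path[OF T a1 a2 a3] pP s1 s2 by (simp add: hd_map last_map hd_rev last_rev)
qed

lemma iso_from_auto:
  assumes bij: "bij_betw \<sigma> V V"
    and pres: "\<And>u v. u \<in> V \<Longrightarrow> v \<in> V \<Longrightarrow> F u v \<longleftrightarrow> F (\<sigma> u) (\<sigma> v)"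
    and Fin: "\<And>u v. F u v \<Longrightarrow> u \<in> W \<and> v \<in> W"
    and WV: "W \<subseteq> V" and sW: "\<And>u. u \<in> V \<Longrightarrow> \<sigma> u \<in> W \<longleftrightarrow> u \<in> W"
    and a: "a \<in> W" and b: "\<sigma> a = b"
  shows "iso_induced F (component W F a) (component W F b)"
proof -
  have img: "\<sigma> ` component W F a = component W F b"
    using component_image[of \<sigma> V F W a, OF bij pres Fin WV sW a] b by simp
  have sub: "component W F a \<subseteq> V" using WV unfolding component_def by auto
  have "inj_on \<sigma> (component W F a)" using bij sub unfolding bij_betw_def by (meson inj_on_subset)
  then have "bij_betw \<sigma> (component W F a) (component W F b)" using img unfolding bij_betw_def by blast
  moreover have "\<forall>u\<in>component W F a. \<forall>v\<in>component W F a. F u v \<longleftrightarrow> F (\<sigma> u) (\<sigma> v)"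
    using pres sub by blast
  ultimately show ?thesis unfolding iso_induced_def by blast
qed

theorem lemma3p9:
  fixes V :: "'a set" and E :: "'a \<Rightarrow> 'a \<Rightarrow> bool" and \<P> :: "'a list set" and P :: "'a list"
  assumes "tree V E" and "iso_unique_zf V E"
    and "min_path_cover V E \<P>" and "P \<in> \<P>"
  defines "l \<equiv> length P"
  defines "x \<equiv> (\<lambda>i. P ! (i - 1))"
  defines "p \<equiv> (if odd l then (l + 1) div 2 else l div 2)"
  shows "(odd l \<and> l \<ge> 3 \<longrightarrow>
            (let W = V - {x p}; F = restrict_adj W E in
             iso_induced F (component W F (x (p - 1))) (component W F (x (p + 1)))))
       \<and> (even l \<longrightarrow>
            (let F = delete_edge E (x p) (x (p + 1)) in
             iso_induced F (component V F (x p)) (component V F (x (p + 1)))))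
       \<and> (\<exists>\<phi>. automorphism V E \<phi> \<and> \<phi> (x 1) = x l \<and> \<phi> (x l) = x 1)"
proof -
  note T = assms(1) and iu = assms(2) and mpc = assms(3) and P = assms(4)
  have g: "graph V E" using T unfolding tree_def by blast
  have pc: "path_cover V E \<P>" using mpc unfolding min_path_cover_def by blast
  have pP: "P \<noteq> []" "distinct P" "set P \<subseteq> V" "successively E P"
    using pc P path_succ unfolding path_cover_def by blast+
  have l1: "l \<ge> 1" unfolding l_def using pP(1) by (cases P) auto
  obtain \<sigma> where au: "automorphism V E \<sigma>" and s1: "\<sigma> (hd P) = last P" and s2: "\<sigma> (last P) = hd P"
    using endpoint_swap[OF T iu mpc P] by blast
  have rv: "map \<sigma> P = rev P" using reverse_path[OF T au pP s1 s2] .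
  have sn: "\<sigma> (P ! i) = P ! (l - Suc i)" if "i < l" for i
  proof -
    have "map \<sigma> P ! i = rev P ! i" using rv by simp
    then show ?thesis using that unfolding l_def by (simp add: rev_nth)
  qed
  have bij: "bij_betw \<sigma> V V" and pres: "\<And>u w. u \<in> V \<Longrightarrow> w \<in> V \<Longrightarrow> E u w \<longleftrightarrow> E (\<sigma> u) (\<sigma> w)"
    using au unfolding automorphism_def by auto
  have inj: "inj_on \<sigma> V" using bij unfolding bij_betw_def by blast
  have psiV: "\<sigma> u \<in> V" if "u \<in> V" for u using bij that bij_betwE by blast
  have nthV: "P ! i \<in> V" if "i < l" for i using pP(3) that unfolding l_def by auto
  have nthinj: "P ! i = P ! j \<longleftrightarrow> i = j" if "i < l" "j < l" for i j
    using nth_eq_iff_index_eq[OF pP(2)] that unfolding l_def by blast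
  have x1: "x 1 = hd P" unfolding x_def using pP(1) by (simp add: hd_conv_nth)
  have xl: "x l = last P" unfolding x_def l_def using pP(1) by (simp add: last_conv_nth)
  have partc: "\<exists>\<phi>. automorphism V E \<phi> \<and> \<phi> (x 1) = x l \<and> \<phi> (x l) = x 1"
    using au s1 s2 x1 xl by metis
  have parta: "odd l \<and> l \<ge> 3 \<longrightarrow>
            (let W = V - {x p}; F = restrict_adj W E in
             iso_induced F (component W F (x (p - 1))) (component W F (x (p + 1))))"
  proof (intro impI)
    assume la: "odd l \<and> l \<ge> 3"
    define q where "q = p - 1"
    have lq: "l = 2 * q + 1" "q \<ge> 1" unfolding q_def p_def using la by (auto elim!: oddE)
    have xp: "x p = P ! q" "x (p - 1) = P ! (q - 1)" "x (p + 1) = P ! (q + 1)"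
      unfolding x_def q_def using lq unfolding q_def by auto
    define m where "m = P ! q"
    have mfix: "\<sigma> m = m" unfolding m_def using sn[of q] lq by simp
    have sa: "\<sigma> (P ! (q - 1)) = P ! (q + 1)" using sn[of "q - 1"] lq by simp
    have mV: "m \<in> V" unfolding m_def using nthV lq by simp
    define W where "W = V - {m}"
    define F where "F = restrict_adj W E"
    have sW: "\<sigma> u \<in> W \<longleftrightarrow> u \<in> W" if "u \<in> V" for u
    proof -
      have "\<sigma> u = m \<longleftrightarrow> u = m" using inj mfix mV that unfolding inj_on_def by metis
      then show ?thesis unfolding W_def using psiV[OF that] that by auto
    qed
    have presF: "F u v \<longleftrightarrow> F (\<sigma> u) (\<sigma> v)" if "u \<in> V" "v \<in> V" for u v
      unfolding F_def restrict_adj_def using pres[OF that] sW that by blast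
    have Fin: "u \<in> W \<and> v \<in> W" if "F u v" for u v using that unfolding F_def restrict_adj_def by blast
    have WV: "W \<subseteq> V" unfolding W_def by blast
    have aW: "P ! (q - 1) \<in> W" unfolding W_def m_def using nthV nthinj lq by auto
    have "iso_induced F (component W F (P ! (q - 1))) (component W F (P ! (q + 1)))"
      using iso_from_auto[of \<sigma> V F W "P ! (q - 1)", OF bij presF Fin WV sW aW sa] .
    then show "let W = V - {x p}; F = restrict_adj W E in
             iso_induced F (component W F (x (p - 1))) (component W F (x (p + 1)))"
      unfolding Let_def xp W_def F_def m_def .
  qed
  have partb: "even l \<longrightarrow>
            (let F = delete_edge E (x p) (x (p + 1)) in
             iso_induced F (component V F (x p)) (component V F (x (p + 1))))"
  proof (intro impI)
    assume le: "even l"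
    define q where "q = p - 1"
    have lq: "l = 2 * q + 2" unfolding q_def p_def using le l1 by (auto elim!: evenE)
    have p1: "p \<ge> 1" unfolding p_def using le l1 by (auto elim!: evenE)
    have xp: "x p = P ! q" "x (p + 1) = P ! (q + 1)"
      unfolding x_def q_def using p1 by auto
    define c where "c = P ! q"
    define d where "d = P ! (q + 1)"
    have sc: "\<sigma> c = d" unfolding c_def d_def using sn[of q] lq by simp
    have sd: "\<sigma> d = c" unfolding c_def d_def using sn[of "q + 1"] lq by simp
    have cV: "c \<in> V" "d \<in> V" unfolding c_def d_def using nthV lq by auto
    define F where "F = delete_edge E c d"
    have psic: "\<sigma> u = c \<longleftrightarrow> u = d" "\<sigma> u = d \<longleftrightarrow> u = c" if "u \<in> V" for u
      using inj sc sd cV that unfolding inj_on_def by metis+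
    have presF: "F u v \<longleftrightarrow> F (\<sigma> u) (\<sigma> v)" if "u \<in> V" "v \<in> V" for u v
      unfolding F_def delete_edge_def using pres[OF that] psic[OF that(1)] psic[OF that(2)] by blast
    have Fin: "u \<in> V \<and> v \<in> V" if "F u v" for u v
      using that graphD(1,2)[OF g] unfolding F_def delete_edge_def by blast
    have sW: "\<sigma> u \<in> V \<longleftrightarrow> u \<in> V" if "u \<in> V" for u using psiV that by blast
    have "iso_induced F (component V F c) (component V F d)"
      using iso_from_auto[of \<sigma> V F V c, OF bij presF Fin subset_refl sW cV(1) sc] .
    then show "let F = delete_edge E (x p) (x (p + 1)) in
             iso_induced F (component V F (x p)) (component V F (x (p + 1)))"
      unfolding Let_def xp F_def c_def d_def .
  qed
  show ?thesis using parta partb partc by blast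
qed


end
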